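(* Let $G=H(T,C)$ be a generalized Halin graph such that $\kappa_{LLY}(u,v)>0$ for every edge $\{u,v\}$ of $G$. Let $x$ be a vertex of $T$ of maximum degree $D(T)$, and consider the connected components of $T-\{x\}$. For any two vertices $p,q$ that are adjacent on $C$ and lie in different components of $T-\{x\}$, we have $d_T(x,p)+d_T(x,q)\le 4$.
   Context: All graphs are finite, simple, undirected and connected; $d(\cdot,\cdot)$ is the shortest-path distance in $G$, $d_T(\cdot,\cdot)$ the distance in the tree $T$, and $d_v$ the degree of $v$. Lin-Lu-Yau curvature: for a vertex $v$ and $\alpha\in[0,1]$ let $m_v^\alpha(v)=\alpha$, $m_v^\alpha(u)=(1-\alpha)/d_v$ for neighbors $u$ of $v$, and $0$ elsewhere. For probability measures $m_1,m_2$, $W(m_1,m_2)=\inf_\pi\sum_{u,w}\pi(u,w)d(u,w)$ over couplings $\pi$ of $m_1,m_2$. For an edge $\{u,v\}$, $\kappa_\alpha(u,v)=1-W(m_u^\alpha,m_v^\alpha)$ and $\kappa_{LLY}(u,v)=\lim_{\alpha\to1}\kappa_\alpha(u,v)/(1-\alpha)$. A generalized Halin graph $H(T,C)$ is obtained from a tree $T$ with maximum degree $D(T)\ge3$ together with a planar embedding, by adding a cycle $C$ through all leaves of $T$ in the cyclic order in which they appear in the embedding. *)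

theory Defs
  imports "HOL-Analysis.Analysis"
begin

definition simple_graph :: "'a set \<Rightarrow> ('a \<Rightarrow> 'a \<Rightarrow> bool) \<Rightarrow> bool" where
  "simple_graph V E \<longleftrightarrow> finite V \<and> (\<forall>u v. E u v \<longrightarrow> u \<in> V \<and> v \<in> V)
     \<and> (\<forall>u v. E u v \<longrightarrow> E v u) \<and> (\<forall>u. \<not> E u u)"

definition adj_rel :: "('a \<Rightarrow> 'a \<Rightarrow> bool) \<Rightarrow> ('a \<times> 'a) set" where
  "adj_rel E = {(a, b). E a b}"

definition graph_connected :: "'a set \<Rightarrow> ('a \<Rightarrow> 'a \<Rightarrow> bool) \<Rightarrow> bool" where
  "graph_connected V E \<longleftrightarrow> (\<forall>u\<in>V. \<forall>v\<in>V. (u, v) \<in> (adj_rel E)\<^sup>*)"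

definition is_cycle :: "('a \<Rightarrow> 'a \<Rightarrow> bool) \<Rightarrow> 'a list \<Rightarrow> bool" where
  "is_cycle E cs \<longleftrightarrow> length cs \<ge> 3 \<and> distinct cs
     \<and> (\<forall>i < length cs. E (cs ! i) (cs ! ((i + 1) mod length cs)))"

definition is_tree :: "'a set \<Rightarrow> ('a \<Rightarrow> 'a \<Rightarrow> bool) \<Rightarrow> bool" where
  "is_tree V E \<longleftrightarrow> simple_graph V E \<and> V \<noteq> {} \<and> graph_connected V E \<and> \<not> (\<exists>cs. is_cycle E cs)"

definition nbrs :: "('a \<Rightarrow> 'a \<Rightarrow> bool) \<Rightarrow> 'a \<Rightarrow> 'a set" where
  "nbrs E v = {u. E v u}"

definition deg :: "('a \<Rightarrow> 'a \<Rightarrow> bool) \<Rightarrow> 'a \<Rightarrow> nat" where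
  "deg E v = card (nbrs E v)"

definition max_deg :: "'a set \<Rightarrow> ('a \<Rightarrow> 'a \<Rightarrow> bool) \<Rightarrow> nat" where
  "max_deg V E = Max (deg E ` V)"

text \<open>Shortest-path distance (graphs considered are connected).\<close>
definition gdist :: "('a \<Rightarrow> 'a \<Rightarrow> bool) \<Rightarrow> 'a \<Rightarrow> 'a \<Rightarrow> nat" where
  "gdist E u v = (LEAST n. (u, v) \<in> (adj_rel E) ^^ n)"

definition is_leaf :: "('a \<Rightarrow> 'a \<Rightarrow> bool) \<Rightarrow> 'a \<Rightarrow> bool" where
  "is_leaf E v \<longleftrightarrow> deg E v = 1"

text \<open>A planar embedding of a tree is (combinatorially) a rotation system:
  at every vertex v a cyclic permutation rot v of the neighbours of v.\<close>
definition rotation_system :: "'a set \<Rightarrow> ('a \<Rightarrow> 'a \<Rightarrow> bool) \<Rightarrow> ('a \<Rightarrow> 'a \<Rightarrow> 'a) \<Rightarrow> bool" where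
  "rotation_system V E rot \<longleftrightarrow> (\<forall>v\<in>V. bij_betw (rot v) (nbrs E v) (nbrs E v)
      \<and> (\<forall>u\<in>nbrs E v. \<forall>w\<in>nbrs E v. \<exists>n. (rot v ^^ n) u = w))"

text \<open>One step of the boundary (face) walk on darts.\<close>
definition face_step :: "('a \<Rightarrow> 'a \<Rightarrow> 'a) \<Rightarrow> 'a \<times> 'a \<Rightarrow> 'a \<times> 'a" where
  "face_step rot d = (snd d, rot (snd d) (fst d))"

definition next_leaf :: "('a \<Rightarrow> 'a \<Rightarrow> bool) \<Rightarrow> ('a \<Rightarrow> 'a \<Rightarrow> 'a) \<Rightarrow> 'a \<Rightarrow> 'a" where
  "next_leaf E rot l =
     (let d0 = (l, THE u. E l u);
          n = (LEAST n. n \<ge> 1 \<and> is_leaf E (fst ((face_step rot ^^ n) d0)))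
      in fst ((face_step rot ^^ n) d0))"

text \<open>Edges of the cycle C through the leaves in their cyclic order.\<close>
definition cycle_edge :: "('a \<Rightarrow> 'a \<Rightarrow> bool) \<Rightarrow> ('a \<Rightarrow> 'a \<Rightarrow> 'a) \<Rightarrow> 'a \<Rightarrow> 'a \<Rightarrow> bool" where
  "cycle_edge E rot u v \<longleftrightarrow> is_leaf E u \<and> is_leaf E v \<and> (next_leaf E rot u = v \<or> next_leaf E rot v = u)"

definition gen_halin :: "'a set \<Rightarrow> ('a \<Rightarrow> 'a \<Rightarrow> bool) \<Rightarrow> ('a \<Rightarrow> 'a \<Rightarrow> 'a) \<Rightarrow> bool" where
  "gen_halin V ET rot \<longleftrightarrow> is_tree V ET \<and> max_deg V ET \<ge> 3 \<and> rotation_system V ET rot"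

definition halin_edges :: "('a \<Rightarrow> 'a \<Rightarrow> bool) \<Rightarrow> ('a \<Rightarrow> 'a \<Rightarrow> 'a) \<Rightarrow> 'a \<Rightarrow> 'a \<Rightarrow> bool" where
  "halin_edges ET rot u v \<longleftrightarrow> ET u v \<or> cycle_edge ET rot u v"

definition lazy_measure :: "('a \<Rightarrow> 'a \<Rightarrow> bool) \<Rightarrow> real \<Rightarrow> 'a \<Rightarrow> 'a \<Rightarrow> real" where
  "lazy_measure E \<alpha> v w = (if w = v then \<alpha> else if E v w then (1 - \<alpha>) / real (deg E v) else 0)"

definition is_coupling :: "'a set \<Rightarrow> ('a \<Rightarrow> real) \<Rightarrow> ('a \<Rightarrow> real) \<Rightarrow> ('a \<Rightarrow> 'a \<Rightarrow> real) \<Rightarrow> bool" where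
  "is_coupling V m1 m2 \<pi> \<longleftrightarrow> (\<forall>a b. \<pi> a b \<ge> 0) \<and> (\<forall>a b. \<pi> a b \<noteq> 0 \<longrightarrow> a \<in> V \<and> b \<in> V)
     \<and> (\<forall>a\<in>V. (\<Sum>b\<in>V. \<pi> a b) = m1 a) \<and> (\<forall>b\<in>V. (\<Sum>a\<in>V. \<pi> a b) = m2 b)"

definition wasserstein :: "'a set \<Rightarrow> ('a \<Rightarrow> 'a \<Rightarrow> bool) \<Rightarrow> ('a \<Rightarrow> real) \<Rightarrow> ('a \<Rightarrow> real) \<Rightarrow> real" where
  "wasserstein V E m1 m2 =
     Inf {(\<Sum>a\<in>V. \<Sum>b\<in>V. \<pi> a b * real (gdist E a b)) | \<pi>. is_coupling V m1 m2 \<pi>}"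

definition kappa_alpha :: "'a set \<Rightarrow> ('a \<Rightarrow> 'a \<Rightarrow> bool) \<Rightarrow> real \<Rightarrow> 'a \<Rightarrow> 'a \<Rightarrow> real" where
  "kappa_alpha V E \<alpha> u v = 1 - wasserstein V E (lazy_measure E \<alpha> u) (lazy_measure E \<alpha> v)"

definition kappa_LLY :: "'a set \<Rightarrow> ('a \<Rightarrow> 'a \<Rightarrow> bool) \<Rightarrow> 'a \<Rightarrow> 'a \<Rightarrow> real" where
  "kappa_LLY V E u v = Lim (at_left 1) (\<lambda>\<alpha>. kappa_alpha V E \<alpha> u v / (1 - \<alpha>))"

end

theory Submission
  imports Defs
begin

lemma lazy_split:
  assumes "\<not> E u u"
  shows "lazy_measure E \<alpha> u w = (if w = u then \<alpha> else 0) + (if w \<in> nbrs E u then (1 - \<alpha>) / real (deg E u) else 0)"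
  using assms by (auto simp: lazy_measure_def nbrs_def)

lemma lazy_sum_g:
  assumes fin: "finite V" and uV: "u \<in> V" and NV: "nbrs E u \<subseteq> V" and irr: "\<not> E u u"
  shows "(\<Sum>w\<in>V. g w * lazy_measure E \<alpha> u w) = \<alpha> * g u + (1 - \<alpha>) / real (deg E u) * (\<Sum>w\<in>nbrs E u. g w)"
proof -
  have "(\<Sum>w\<in>V. g w * lazy_measure E \<alpha> u w) =
        (\<Sum>w\<in>V. (if w = u then \<alpha> * g u else 0)) + (\<Sum>w\<in>V. (if w \<in> nbrs E u then (1 - \<alpha>) / real (deg E u) * g w else 0))"
    unfolding sum.distrib[symmetric]
  proof (rule sum.cong)
    fix w show "g w * lazy_measure E \<alpha> u w = (if w = u then \<alpha> * g u else 0) + (if w \<in> nbrs E u then (1 - \<alpha>) / real (deg E u) * g w else 0)"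
      using irr by (auto simp: lazy_measure_def nbrs_def algebra_simps)
  qed simp
  also have "(\<Sum>w\<in>V. (if w = u then \<alpha> * g u else 0)) = \<alpha> * g u" using fin uV by simp
  also have "(\<Sum>w\<in>V. (if w \<in> nbrs E u then (1 - \<alpha>) / real (deg E u) * g w else 0)) =
             (\<Sum>w\<in>nbrs E u. (1 - \<alpha>) / real (deg E u) * g w)"
    using fin NV by (simp add: sum.inter_restrict[symmetric] Int_absorb1)
  also have "\<dots> = (1 - \<alpha>) / real (deg E u) * (\<Sum>w\<in>nbrs E u. g w)" by (simp add: sum_distrib_left)
  finally show ?thesis .
qed

lemma lazy_sum_1:
  assumes fin: "finite V" and uV: "u \<in> V" and NV: "nbrs E u \<subseteq> V" and irr: "\<not> E u u"
    and dpos: "deg E u > 0"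
  shows "(\<Sum>w\<in>V. lazy_measure E \<alpha> u w) = 1"
proof -
  have "(\<Sum>w\<in>V. lazy_measure E \<alpha> u w) = (\<Sum>w\<in>V. 1 * lazy_measure E \<alpha> u w)" by simp
  also have "\<dots> = \<alpha> * 1 + (1 - \<alpha>) / real (deg E u) * (\<Sum>w\<in>nbrs E u. 1)"
    by (rule lazy_sum_g[OF assms(1-4)])
  also have "\<dots> = 1" using dpos by (simp add: deg_def)
  finally show ?thesis .
qed

lemma lazy_nonneg:
  assumes "0 \<le> \<alpha>" "\<alpha> \<le> 1"
  shows "0 \<le> lazy_measure E \<alpha> u w"
  using assms by (auto simp: lazy_measure_def)

locale curv_edge =
  fixes V :: "'a set" and E :: "'a \<Rightarrow> 'a \<Rightarrow> bool" and u v :: 'a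
  assumes fin: "finite V"
    and Esub: "\<And>a b. E a b \<Longrightarrow> a \<in> V \<and> b \<in> V"
    and irr: "\<And>a. \<not> E a a"
    and uv: "E u v" and vu: "E v u"
begin

lemma uV: "u \<in> V" and vV: "v \<in> V" using Esub uv by auto

lemma NV: "nbrs E a \<subseteq> V" using Esub by (auto simp: nbrs_def)

lemma finN: "finite (nbrs E a)" using NV fin finite_subset by blast

lemma degu: "deg E u > 0"
  using uv finN[of u] by (auto simp: deg_def nbrs_def card_gt_0_iff)

lemma degv: "deg E v > 0"
  using vu finN[of v] by (auto simp: deg_def nbrs_def card_gt_0_iff)

abbreviation "mu \<alpha> \<equiv> lazy_measure E \<alpha> u"
abbreviation "mv \<alpha> \<equiv> lazy_measure E \<alpha> v"

definition cost :: "('a \<Rightarrow> 'a \<Rightarrow> real) \<Rightarrow> real" where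
  "cost \<pi> = (\<Sum>a\<in>V. \<Sum>b\<in>V. \<pi> a b * real (gdist E a b))"

definition CS :: "real \<Rightarrow> real set" where
  "CS \<alpha> = {(\<Sum>a\<in>V. \<Sum>b\<in>V. \<pi> a b * real (gdist E a b)) | \<pi>. is_coupling V (mu \<alpha>) (mv \<alpha>) \<pi>}"

lemma W_eq: "wasserstein V E (mu \<alpha>) (mv \<alpha>) = Inf (CS \<alpha>)"
  unfolding wasserstein_def CS_def ..

lemma prod_coupling:
  assumes "0 \<le> \<alpha>" "\<alpha> \<le> 1"
  shows "is_coupling V (mu \<alpha>) (mv \<alpha>) (\<lambda>a b. if a \<in> V \<and> b \<in> V then mu \<alpha> a * mv \<alpha> b else 0)"
proof -
  have s1: "(\<Sum>w\<in>V. mu \<alpha> w) = 1" by (rule lazy_sum_1[OF fin uV NV irr degu])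
  have s2: "(\<Sum>w\<in>V. mv \<alpha> w) = 1" by (rule lazy_sum_1[OF fin vV NV irr degv])
  show ?thesis unfolding is_coupling_def
  proof (intro conjI ballI allI impI)
    fix a b show "0 \<le> (if a \<in> V \<and> b \<in> V then mu \<alpha> a * mv \<alpha> b else 0)"
      by (auto intro!: mult_nonneg_nonneg lazy_nonneg[OF assms])
  next
    fix a b assume "(if a \<in> V \<and> b \<in> V then mu \<alpha> a * mv \<alpha> b else 0) \<noteq> 0"
    then show "a \<in> V" "b \<in> V" by (auto split: if_splits)
  next
    fix a assume a: "a \<in> V"
    have "(\<Sum>b\<in>V. if a \<in> V \<and> b \<in> V then mu \<alpha> a * mv \<alpha> b else 0) = (\<Sum>b\<in>V. mu \<alpha> a * mv \<alpha> b)"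
      using a by (intro sum.cong) auto
    also have "\<dots> = mu \<alpha> a" using s2 by (simp add: sum_distrib_left[symmetric])
    finally show "(\<Sum>b\<in>V. if a \<in> V \<and> b \<in> V then mu \<alpha> a * mv \<alpha> b else 0) = mu \<alpha> a" .
  next
    fix b assume b: "b \<in> V"
    have "(\<Sum>a\<in>V. if a \<in> V \<and> b \<in> V then mu \<alpha> a * mv \<alpha> b else 0) = (\<Sum>a\<in>V. mu \<alpha> a * mv \<alpha> b)"
      using b by (intro sum.cong) auto
    also have "\<dots> = mv \<alpha> b" using s1 by (simp add: sum_distrib_right[symmetric])
    finally show "(\<Sum>a\<in>V. if a \<in> V \<and> b \<in> V then mu \<alpha> a * mv \<alpha> b else 0) = mv \<alpha> b" .
  qed
qed

lemma CS_ne: "0 \<le> \<alpha> \<Longrightarrow> \<alpha> \<le> 1 \<Longrightarrow> CS \<alpha> \<noteq> {}"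
  using prod_coupling unfolding CS_def by blast

lemma CS_bdd: "bdd_below (CS \<alpha>)"
proof -
  have "\<forall>c\<in>CS \<alpha>. 0 \<le> c"
    unfolding CS_def is_coupling_def by (auto intro!: sum_nonneg mult_nonneg_nonneg)
  then show ?thesis by (auto intro: bdd_belowI)
qed

lemma coupling_support:
  assumes c: "is_coupling V (mu \<alpha>) (mv \<alpha>) \<pi>" and S: "{u, v} \<union> nbrs E u \<union> nbrs E v \<subseteq> S"
    and a: "a \<in> V" and b: "b \<in> V" and nz: "\<pi> a b \<noteq> 0"
  shows "a \<in> S \<and> b \<in> S"
proof (rule conjI; rule ccontr)
  assume aS: "a \<notin> S"
  then have "mu \<alpha> a = 0" using S by (auto simp: lazy_measure_def nbrs_def)
  then have "(\<Sum>b\<in>V. \<pi> a b) = 0" using c a unfolding is_coupling_def by auto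
  then have "\<forall>b\<in>V. \<pi> a b = 0" using c fin by (subst (asm) sum_nonneg_eq_0_iff) (auto simp: is_coupling_def)
  then show False using b nz by auto
next
  assume bS: "b \<notin> S"
  then have "mv \<alpha> b = 0" using S by (auto simp: lazy_measure_def nbrs_def)
  then have "(\<Sum>a\<in>V. \<pi> a b) = 0" using c b unfolding is_coupling_def by auto
  then have "\<forall>a\<in>V. \<pi> a b = 0" using c fin by (subst (asm) sum_nonneg_eq_0_iff) (auto simp: is_coupling_def)
  then show False using a nz by auto
qed

lemma W_ge1:
  assumes al: "0 \<le> \<alpha>" "\<alpha> \<le> 1"
    and S: "{u, v} \<union> nbrs E u \<union> nbrs E v \<subseteq> S"
    and lip: "\<And>a b. a \<in> S \<Longrightarrow> b \<in> S \<Longrightarrow> g a - g b \<le> real (gdist E a b)"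
    and guv: "g u - g v \<ge> 1"
    and avg: "(\<Sum>w\<in>nbrs E u. g w) / real (deg E u) - (\<Sum>w\<in>nbrs E v. g w) / real (deg E v) \<ge> 1"
  shows "1 \<le> Inf (CS \<alpha>)"
proof (rule cInf_greatest[OF CS_ne[OF al]])
  fix c assume "c \<in> CS \<alpha>"
  then obtain \<pi> where c: "c = (\<Sum>a\<in>V. \<Sum>b\<in>V. \<pi> a b * real (gdist E a b))"
    and cp: "is_coupling V (mu \<alpha>) (mv \<alpha>) \<pi>" unfolding CS_def by blast
  have pos: "\<And>a b. 0 \<le> \<pi> a b" using cp by (auto simp: is_coupling_def)
  have m1: "\<And>a. a \<in> V \<Longrightarrow> (\<Sum>b\<in>V. \<pi> a b) = mu \<alpha> a" using cp by (auto simp: is_coupling_def)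
  have m2: "\<And>b. b \<in> V \<Longrightarrow> (\<Sum>a\<in>V. \<pi> a b) = mv \<alpha> b" using cp by (auto simp: is_coupling_def)
  have le: "\<pi> a b * (g a - g b) \<le> \<pi> a b * real (gdist E a b)" if "a \<in> V" "b \<in> V" for a b
  proof (cases "\<pi> a b = 0")
    case False
    then have "a \<in> S \<and> b \<in> S" using coupling_support[OF cp S that] by blast
    then show ?thesis using lip pos by (intro mult_left_mono) auto
  qed simp
  have "(\<Sum>a\<in>V. \<Sum>b\<in>V. \<pi> a b * (g a - g b)) \<le> c"
    unfolding c by (intro sum_mono) (use le in auto)
  moreover have "(\<Sum>a\<in>V. \<Sum>b\<in>V. \<pi> a b * (g a - g b)) =
      (\<Sum>a\<in>V. g a * mu \<alpha> a) - (\<Sum>b\<in>V. g b * mv \<alpha> b)"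
  proof -
    have "(\<Sum>a\<in>V. \<Sum>b\<in>V. \<pi> a b * (g a - g b)) = (\<Sum>a\<in>V. \<Sum>b\<in>V. \<pi> a b * g a) - (\<Sum>a\<in>V. \<Sum>b\<in>V. \<pi> a b * g b)"
      by (simp add: algebra_simps sum_subtractf)
    also have "(\<Sum>a\<in>V. \<Sum>b\<in>V. \<pi> a b * g a) = (\<Sum>a\<in>V. g a * mu \<alpha> a)"
      by (intro sum.cong refl) (simp add: m1[symmetric] sum_distrib_left mult.commute)
    also have "(\<Sum>a\<in>V. \<Sum>b\<in>V. \<pi> a b * g b) = (\<Sum>b\<in>V. \<Sum>a\<in>V. \<pi> a b * g b)" by (rule sum.swap)
    also have "\<dots> = (\<Sum>b\<in>V. g b * mv \<alpha> b)"
      by (intro sum.cong refl) (simp add: m2[symmetric] sum_distrib_left mult.commute)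
    finally show ?thesis .
  qed
  moreover have "(\<Sum>a\<in>V. g a * mu \<alpha> a) - (\<Sum>b\<in>V. g b * mv \<alpha> b) =
      \<alpha> * (g u - g v) + (1 - \<alpha>) * ((\<Sum>w\<in>nbrs E u. g w) / real (deg E u) - (\<Sum>w\<in>nbrs E v. g w) / real (deg E v))"
    by (simp add: lazy_sum_g[OF fin uV NV irr] lazy_sum_g[OF fin vV NV irr] algebra_simps)
  moreover have "1 \<le> \<alpha> * (g u - g v) + (1 - \<alpha>) * ((\<Sum>w\<in>nbrs E u. g w) / real (deg E u) - (\<Sum>w\<in>nbrs E v. g w) / real (deg E v))"
  proof -
    have "\<alpha> * 1 \<le> \<alpha> * (g u - g v)" using al guv by (intro mult_left_mono) auto
    moreover have "(1 - \<alpha>) * 1 \<le> (1 - \<alpha>) * ((\<Sum>w\<in>nbrs E u. g w) / real (deg E u) - (\<Sum>w\<in>nbrs E v. g w) / real (deg E v))"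
      using al avg by (intro mult_left_mono) auto
    ultimately show ?thesis by simp
  qed
  ultimately show "1 \<le> c" by linarith
qed

lemma gdist_adj_le1: "E a b \<Longrightarrow> gdist E a b \<le> 1"
  unfolding gdist_def by (rule Least_le) (simp add: adj_rel_def)

definition hfun :: "real \<Rightarrow> real" where
  "hfun \<alpha> = kappa_alpha V E \<alpha> u v / (1 - \<alpha>)"

lemma mix_coupling:
  assumes cp: "is_coupling V (mu \<alpha>) (mv \<alpha>) \<pi>" and al: "0 \<le> \<alpha>" "\<alpha> < \<beta>" "\<beta> < 1"
  defines "t \<equiv> (1 - \<beta>) / (1 - \<alpha>)"
  shows "is_coupling V (mu \<beta>) (mv \<beta>) (\<lambda>a b. t * \<pi> a b + (1 - t) * (if a = u \<and> b = v then 1 else 0))"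
proof -
  have t0: "0 < t" "t < 1" using al unfolding t_def by (auto simp: field_simps)
  have tt: "t * (1 - \<alpha>) = 1 - \<beta>" using al unfolding t_def by (auto simp: field_simps)
  have m1: "\<And>a. a \<in> V \<Longrightarrow> (\<Sum>b\<in>V. \<pi> a b) = mu \<alpha> a" using cp by (auto simp: is_coupling_def)
  have m2: "\<And>b. b \<in> V \<Longrightarrow> (\<Sum>a\<in>V. \<pi> a b) = mv \<alpha> b" using cp by (auto simp: is_coupling_def)
  have mix: "t * lazy_measure E \<alpha> z w + (1 - t) * (if w = z then 1 else 0) = lazy_measure E \<beta> z w" for z w
  proof -
    have "t * \<alpha> + (1 - t) = \<beta>" using tt by (simp add: algebra_simps)
    then show ?thesis using tt by (auto simp: lazy_measure_def)
  qed
  show ?thesis unfolding is_coupling_def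
  proof (intro conjI ballI allI impI)
    fix a b show "0 \<le> t * \<pi> a b + (1 - t) * (if a = u \<and> b = v then 1 else 0)"
      using cp t0 by (auto simp: is_coupling_def)
  next
    fix a b assume "t * \<pi> a b + (1 - t) * (if a = u \<and> b = v then 1 else 0) \<noteq> 0"
    then show "a \<in> V" "b \<in> V" using cp uV vV by (auto simp: is_coupling_def split: if_splits)
  next
    fix a assume a: "a \<in> V"
    have "(\<Sum>b\<in>V. t * \<pi> a b + (1 - t) * (if a = u \<and> b = v then 1 else 0)) =
        t * (\<Sum>b\<in>V. \<pi> a b) + (1 - t) * (\<Sum>b\<in>V. if a = u \<and> b = v then 1 else 0)"
      by (simp add: sum.distrib sum_distrib_left)
    also have "(\<Sum>b\<in>V. if a = u \<and> b = v then 1 else (0::real)) = (if a = u then 1 else 0)"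
      using fin vV by (cases "a = u") auto
    finally show "(\<Sum>b\<in>V. t * \<pi> a b + (1 - t) * (if a = u \<and> b = v then 1 else 0)) = mu \<beta> a"
      using mix[of u a] m1[OF a] by (auto simp: eq_commute)
  next
    fix b assume b: "b \<in> V"
    have "(\<Sum>a\<in>V. t * \<pi> a b + (1 - t) * (if a = u \<and> b = v then 1 else 0)) =
        t * (\<Sum>a\<in>V. \<pi> a b) + (1 - t) * (\<Sum>a\<in>V. if a = u \<and> b = v then 1 else 0)"
      by (simp add: sum.distrib sum_distrib_left)
    also have "(\<Sum>a\<in>V. if a = u \<and> b = v then 1 else (0::real)) = (if b = v then 1 else 0)"
      using fin uV by (cases "b = v") auto
    finally show "(\<Sum>a\<in>V. t * \<pi> a b + (1 - t) * (if a = u \<and> b = v then 1 else 0)) = mv \<beta> b"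
      using mix[of v b] m2[OF b] by (auto simp: eq_commute)
  qed
qed

lemma W_mix:
  assumes al: "0 \<le> \<alpha>" "\<alpha> < \<beta>" "\<beta> < 1"
  defines "t \<equiv> (1 - \<beta>) / (1 - \<alpha>)"
  shows "Inf (CS \<beta>) \<le> t * Inf (CS \<alpha>) + (1 - t)"
proof -
  have t0: "0 < t" "t < 1" using al unfolding t_def by (auto simp: field_simps)
  have "(Inf (CS \<beta>) - (1 - t)) / t \<le> Inf (CS \<alpha>)"
  proof (rule cInf_greatest[OF CS_ne])
    show "0 \<le> \<alpha>" "\<alpha> \<le> 1" using al by auto
    fix c assume "c \<in> CS \<alpha>"
    then obtain \<pi> where c: "c = (\<Sum>a\<in>V. \<Sum>b\<in>V. \<pi> a b * real (gdist E a b))"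
      and cp: "is_coupling V (mu \<alpha>) (mv \<alpha>) \<pi>" unfolding CS_def by blast
    let ?p = "\<lambda>a b. t * \<pi> a b + (1 - t) * (if a = u \<and> b = v then 1 else 0)"
    have "is_coupling V (mu \<beta>) (mv \<beta>) ?p" using mix_coupling[OF cp al] unfolding t_def .
    then have "(\<Sum>a\<in>V. \<Sum>b\<in>V. ?p a b * real (gdist E a b)) \<in> CS \<beta>" unfolding CS_def by (auto intro!: exI[of _ ?p])
    then have "Inf (CS \<beta>) \<le> (\<Sum>a\<in>V. \<Sum>b\<in>V. ?p a b * real (gdist E a b))"
      by (rule cInf_lower[OF _ CS_bdd])
    also have "\<dots> = t * c + (1 - t) * (\<Sum>a\<in>V. \<Sum>b\<in>V. (if a = u \<and> b = v then 1 else 0) * real (gdist E a b))"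
    proof -
      have "\<And>a b. ?p a b * real (gdist E a b) = t * (\<pi> a b * real (gdist E a b)) + (1 - t) * ((if a = u \<and> b = v then 1 else 0) * real (gdist E a b))"
        by (simp add: algebra_simps)
      then show ?thesis unfolding c by (simp add: sum.distrib sum_distrib_left)
    qed
    also have "(\<Sum>a\<in>V. \<Sum>b\<in>V. (if a = u \<and> b = v then 1 else 0) * real (gdist E a b)) = real (gdist E u v)"
    proof -
      have e: "\<And>a b. (if a = u \<and> b = v then 1 else 0) * real (gdist E a b) = (if a = u then (if b = v then real (gdist E u v) else 0) else 0)"
        by auto
      have "\<And>a. (\<Sum>b\<in>V. (if a = u \<and> b = v then 1 else 0) * real (gdist E a b)) = (if a = u then real (gdist E u v) else 0)"
        unfolding e using fin vV by auto
      then show ?thesis using fin uV by simp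
    qed
    also have "t * c + (1 - t) * real (gdist E u v) \<le> t * c + (1 - t)"
      using gdist_adj_le1[OF uv] t0 by (simp add: mult_left_le)
    finally have "Inf (CS \<beta>) - (1 - t) \<le> t * c" by simp
    then show "(Inf (CS \<beta>) - (1 - t)) / t \<le> c" using t0 by (simp add: divide_le_eq mult.commute)
  qed
  then show ?thesis using t0 by (simp add: divide_le_eq algebra_simps)
qed

lemma hfun_mono:
  assumes al: "0 \<le> \<alpha>" "\<alpha> < \<beta>" "\<beta> < 1"
  shows "hfun \<alpha> \<le> hfun \<beta>"
proof -
  define t where "t = (1 - \<beta>) / (1 - \<alpha>)"
  have t0: "0 < t" "t < 1" using al unfolding t_def by (auto simp: field_simps)
  have tt: "t * (1 - \<alpha>) = 1 - \<beta>" using al unfolding t_def by (auto simp: field_simps)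
  have W: "Inf (CS \<beta>) \<le> t * Inf (CS \<alpha>) + (1 - t)" using W_mix[OF al] unfolding t_def .
  have "hfun \<alpha> = t * (1 - Inf (CS \<alpha>)) / (1 - \<beta>)"
  proof -
    have n: "1 - \<alpha> \<noteq> 0" "1 - \<beta> \<noteq> 0" using al by auto
    have "t * (1 - Inf (CS \<alpha>)) / (1 - \<beta>) = (1 - Inf (CS \<alpha>)) / (1 - \<alpha>)"
      unfolding t_def using n by (simp add: divide_simps)
    then show ?thesis unfolding hfun_def kappa_alpha_def W_eq by simp
  qed
  also have "\<dots> \<le> (1 - Inf (CS \<beta>)) / (1 - \<beta>)"
    using W al by (intro divide_right_mono) (auto simp: algebra_simps)
  also have "\<dots> = hfun \<beta>" unfolding hfun_def kappa_alpha_def W_eq ..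
  finally show ?thesis .
qed

theorem kappa_nonpos:
  assumes S: "{u, v} \<union> nbrs E u \<union> nbrs E v \<subseteq> S"
    and lip: "\<And>a b. a \<in> S \<Longrightarrow> b \<in> S \<Longrightarrow> g a - g b \<le> real (gdist E a b)"
    and guv: "g u - g v \<ge> 1"
    and avg: "(\<Sum>w\<in>nbrs E u. g w) / real (deg E u) - (\<Sum>w\<in>nbrs E v. g w) / real (deg E v) \<ge> 1"
  shows "kappa_LLY V E u v \<le> 0"
proof -
  have hle: "hfun \<alpha> \<le> 0" if "0 \<le> \<alpha>" "\<alpha> < 1" for \<alpha>
  proof -
    have "1 \<le> Inf (CS \<alpha>)" using W_ge1[OF _ _ S lip guv avg] that by auto
    then show ?thesis unfolding hfun_def kappa_alpha_def W_eq using that by (auto simp: divide_le_0_iff)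
  qed
  define L where "L = Sup (hfun ` {0..<1})"
  have ne: "hfun ` {0..<1} \<noteq> {}" by auto
  have bdd: "bdd_above (hfun ` {0..<1})" using hle by (intro bdd_aboveI[where M=0]) auto
  have L0: "L \<le> 0" unfolding L_def using hle by (intro cSup_least[OF ne]) auto
  have lim: "(hfun \<longlongrightarrow> L) (at_left 1)"
  proof (rule order_tendstoI)
    fix a assume "a < L"
    then obtain \<alpha>0 where a0: "\<alpha>0 \<in> {0..<1}" "a < hfun \<alpha>0"
      unfolding L_def using less_cSup_iff[OF ne bdd] by auto
    have "\<forall>\<^sub>F x in at_left 1. x \<in> {\<alpha>0<..<1}" using a0 by (intro eventually_at_left_real) auto
    then show "\<forall>\<^sub>F x in at_left 1. a < hfun x"
    proof (rule eventually_mono)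
      fix x assume "x \<in> {\<alpha>0<..<1}"
      then have "hfun \<alpha>0 \<le> hfun x" using a0 by (intro hfun_mono) auto
      then show "a < hfun x" using a0 by auto
    qed
  next
    fix a assume "L < a"
    have "\<forall>\<^sub>F x in at_left 1. x \<in> {0<..<(1::real)}" by (intro eventually_at_left_real) auto
    then show "\<forall>\<^sub>F x in at_left 1. hfun x < a"
    proof (rule eventually_mono)
      fix x assume "x \<in> {0<..<(1::real)}"
      then have "hfun x \<le> L" unfolding L_def using bdd by (intro cSup_upper) auto
      then show "hfun x < a" using \<open>L < a\<close> by auto
    qed
  qed
  have "kappa_LLY V E u v = Lim (at_left 1) hfun"
    unfolding kappa_LLY_def hfun_def ..
  also have "\<dots> = L" using lim by (intro tendsto_Lim) (auto simp: trivial_limit_at_left_real)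
  finally show ?thesis using L0 by simp
qed

end


definition fwalk :: "('a \<Rightarrow> 'a \<Rightarrow> bool) \<Rightarrow> (nat \<Rightarrow> 'a) \<Rightarrow> nat \<Rightarrow> bool" where
  "fwalk E f n \<longleftrightarrow> (\<forall>i<n. E (f i) (f (Suc i)))"

definition fpath :: "('a \<Rightarrow> 'a \<Rightarrow> bool) \<Rightarrow> (nat \<Rightarrow> 'a) \<Rightarrow> nat \<Rightarrow> bool" where
  "fpath E f n \<longleftrightarrow> fwalk E f n \<and> inj_on f {..n}"

lemma fwalk_rtrancl:
  assumes "fwalk P f n" "i \<le> k" "k \<le> n"
  shows "(f i, f k) \<in> {(a, b). P a b}\<^sup>*"
  using assms(2,3)
proof (induction k rule: dec_induct)
  case base then show ?case by simp
next
  case (step k)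
  then have "P (f k) (f (Suc k))" using assms(1) by (auto simp: fwalk_def)
  with step show ?case by (meson Suc_leD case_prodI mem_Collect_eq rtrancl.rtrancl_into_rtrancl)
qed

lemma fwalk_relpow:
  assumes "fwalk E f n" "i \<le> k" "k \<le> n"
  shows "(f i, f k) \<in> (adj_rel E) ^^ (k - i)"
  using assms(2,3)
proof (induction k rule: dec_induct)
  case base then show ?case by simp
next
  case (step k)
  then have "E (f k) (f (Suc k))" using assms(1) by (auto simp: fwalk_def)
  then have "(f k, f (Suc k)) \<in> adj_rel E" by (simp add: adj_rel_def)
  with step have "(f i, f (Suc k)) \<in> adj_rel E ^^ Suc (k - i)" by (meson Suc_leD relpow_Suc_I)
  then show ?case using step by (simp add: Suc_diff_le)
qed

lemma rtrancl_fwalk: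
  assumes "(a, b) \<in> {(x, y). P x y}\<^sup>*"
  shows "\<exists>f n. fwalk P f n \<and> f 0 = a \<and> f n = b"
  using assms
proof (induction rule: rtrancl_induct)
  case base
  show ?case by (rule exI[of _ "\<lambda>_. a"], rule exI[of _ 0]) (simp add: fwalk_def)
next
  case (step y z)
  then obtain f n where f: "fwalk P f n" "f 0 = a" "f n = y" by blast
  let ?g = "f(Suc n := z)"
  have "fwalk P ?g (Suc n)" using f step(2) by (auto simp: fwalk_def less_Suc_eq)
  moreover have "?g 0 = a" "?g (Suc n) = z" using f by auto
  ultimately show ?case by blast
qed

lemma fwalk_fpath:
  assumes "fwalk P f n"
  shows "\<exists>g m. fpath P g m \<and> g 0 = f 0 \<and> g m = f n \<and> g ` {..m} \<subseteq> f ` {..n}"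
  using assms
proof (induction n arbitrary: f rule: less_induct)
  case (less n)
  show ?case
  proof (cases "inj_on f {..n}")
    case True then show ?thesis using less.prems by (auto simp: fpath_def)
  next
    case False
    then obtain i0 k0 where ik0: "i0 \<le> n" "k0 \<le> n" "i0 \<noteq> k0" "f i0 = f k0"
      unfolding inj_on_def by blast
    have "\<exists>i k. i < k \<and> k \<le> n \<and> f i = f k"
    proof (cases "i0 < k0")
      case True then show ?thesis using ik0 by blast
    next
      case False then have "k0 < i0" using ik0 by simp
      then show ?thesis using ik0 by (intro exI[of _ k0] exI[of _ i0]) simp
    qed
    then obtain i k where ik: "i < k" "k \<le> n" "f i = f k" by blast
    define g where "g t = (if t \<le> i then f t else f (t + (k - i)))" for t
    have w: "fwalk P g (n - (k - i))" unfolding fwalk_def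
    proof (intro allI impI)
      fix t assume t: "t < n - (k - i)"
      show "P (g t) (g (Suc t))"
      proof (cases "t < i")
        case True then show ?thesis using less.prems t ik by (auto simp: g_def fwalk_def)
      next
        case False
        show ?thesis
        proof (cases "t = i")
          case True
          then have "g t = f k" "g (Suc t) = f (Suc k)" using ik by (auto simp: g_def)
          moreover have "k < n" using t True ik by auto
          ultimately show ?thesis using less.prems by (auto simp: fwalk_def)
        next
          case False
          then have "g t = f (t + (k - i))" "g (Suc t) = f (Suc (t + (k - i)))" using \<open>\<not> t < i\<close> by (auto simp: g_def)
          moreover have "t + (k - i) < n" using t by auto
          ultimately show ?thesis using less.prems by (auto simp: fwalk_def)
        qed
      qed
    qed
    have lt: "n - (k - i) < n" using ik by auto
    obtain h m where h: "fpath P h m" "h 0 = g 0" "h m = g (n - (k - i))" "h ` {..m} \<subseteq> g ` {..n - (k - i)}"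
      using less.IH[OF lt w] by blast
    have e0: "g 0 = f 0" by (simp add: g_def)
    have en: "g (n - (k - i)) = f n"
    proof (cases "n - (k - i) \<le> i")
      case True then have "n = k" using ik by auto
      then show ?thesis using ik True by (simp add: g_def)
    next
      case False then show ?thesis using ik by (simp add: g_def)
    qed
    have im: "g ` {..n - (k - i)} \<subseteq> f ` {..n}"
    proof
      fix y assume "y \<in> g ` {..n - (k - i)}"
      then obtain t where t: "t \<le> n - (k - i)" "y = g t" by blast
      show "y \<in> f ` {..n}"
      proof (cases "t \<le> i")
        case True then have "y = f t" "t \<le> n" using t ik by (auto simp: g_def)
        then show ?thesis by blast
      next
        case False then have "y = f (t + (k - i))" "t + (k - i) \<le> n" using t ik by (auto simp: g_def)
        then show ?thesis by blast
      qed
    qed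
    have "fpath P h m \<and> h 0 = f 0 \<and> h m = f n \<and> h ` {..m} \<subseteq> f ` {..n}"
      using h(1) h(2) h(3) h(4) e0 en im by (simp add: subset_trans[OF h(4) im])
    then show ?thesis by blast
  qed
qed

locale tree_ctx =
  fixes V :: "'a set" and ET :: "'a \<Rightarrow> 'a \<Rightarrow> bool"
  assumes tree: "is_tree V ET"
begin

lemma finV: "finite V" using tree by (auto simp: is_tree_def simple_graph_def)
lemma ET_V: "ET a b \<Longrightarrow> a \<in> V \<and> b \<in> V" using tree by (auto simp: is_tree_def simple_graph_def)
lemma ET_sym: "ET a b \<Longrightarrow> ET b a" using tree by (auto simp: is_tree_def simple_graph_def)
lemma ET_irr: "\<not> ET a a" using tree by (auto simp: is_tree_def simple_graph_def)
lemma conn: "a \<in> V \<Longrightarrow> b \<in> V \<Longrightarrow> (a, b) \<in> (adj_rel ET)\<^sup>*"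
  using tree by (auto simp: is_tree_def graph_connected_def)
lemma nocyc: "\<not> is_cycle ET cs" using tree by (auto simp: is_tree_def)

lemma fpath_inj: "fpath E f n \<Longrightarrow> a \<le> n \<Longrightarrow> b \<le> n \<Longrightarrow> f a = f b \<Longrightarrow> a = b"
  by (auto simp: fpath_def inj_on_def)

lemma cycle_fpath:
  assumes "fpath ET f n" "2 \<le> n" "ET (f n) (f 0)"
  shows False
proof -
  let ?cs = "map f [0..<Suc n]"
  have "is_cycle ET ?cs" unfolding is_cycle_def
  proof (intro conjI allI impI)
    show "3 \<le> length ?cs" using assms by simp
    have "set [0..<Suc n] = {..n}" by auto
    then show "distinct ?cs" using assms(1) by (simp add: fpath_def distinct_map del: upt_Suc)
    fix i assume "i < length ?cs"
    then have i: "i \<le> n" by simp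
    show "ET (?cs ! i) (?cs ! ((i + 1) mod length ?cs))"
    proof (cases "i = n")
      case True then show ?thesis using assms(3) by (simp del: upt_Suc)
    next
      case False
      then have "(i + 1) mod Suc n = Suc i" using i by simp
      then show ?thesis using assms(1) i False
        by (simp add: fpath_def fwalk_def nth_append del: upt_Suc)
    qed
  qed
  then show False using nocyc by blast
qed

lemma no_chord:
  assumes p: "fpath ET f n" and i: "i \<le> n" and k: "k \<le> n" and e: "ET (f i) (f k)"
  shows "k = Suc i \<or> i = Suc k"
proof (rule ccontr)
  assume ne: "\<not> (k = Suc i \<or> i = Suc k)"
  have "i \<noteq> k" using e ET_irr by auto
  then consider "i + 2 \<le> k" | "k + 2 \<le> i" using ne by linarith
  then show False
  proof cases
    case 1
    let ?g = "\<lambda>t. f (i + t)"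
    have "inj_on ?g {..k - i}"
    proof (rule inj_onI)
      fix x y assume "x \<in> {..k - i}" "y \<in> {..k - i}" "f (i + x) = f (i + y)"
      then have "i + x = i + y" using fpath_inj[OF p, of "i + x" "i + y"] 1 k by auto
      then show "x = y" by simp
    qed
    then have "fpath ET ?g (k - i)" using p 1 k unfolding fpath_def fwalk_def by auto
    moreover have "ET (?g (k - i)) (?g 0)" using e 1 ET_sym by simp
    ultimately show False using cycle_fpath 1 by fastforce
  next
    case 2
    let ?g = "\<lambda>t. f (k + t)"
    have "inj_on ?g {..i - k}"
    proof (rule inj_onI)
      fix x y assume "x \<in> {..i - k}" "y \<in> {..i - k}" "f (k + x) = f (k + y)"
      then have "k + x = k + y" using fpath_inj[OF p, of "k + x" "k + y"] 2 i by auto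
      then show "x = y" by simp
    qed
    then have "fpath ET ?g (i - k)" using p 2 i unfolding fpath_def fwalk_def by auto
    moreover have "ET (?g (i - k)) (?g 0)" using e 2 by simp
    ultimately show False using cycle_fpath 2 by fastforce
  qed
qed

lemma no_ext:
  assumes p: "fpath ET f n" and ik: "i < k" "k \<le> n" and z: "z \<notin> f ` {..n}"
    and e1: "ET z (f i)" and e2: "ET z (f k)"
  shows False
proof -
  define g where "g t = (if t \<le> k - i then f (i + t) else z)" for t
  have "fpath ET g (Suc (k - i))" unfolding fpath_def fwalk_def
  proof (intro conjI allI impI)
    fix t assume t: "t < Suc (k - i)"
    show "ET (g t) (g (Suc t))"
    proof (cases "t < k - i")
      case True then show ?thesis using p ik by (auto simp: g_def fpath_def fwalk_def)
    next
      case False then have "t = k - i" using t by simp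
      then show ?thesis using e2 ik ET_sym by (auto simp: g_def)
    qed
  next
    show "inj_on g {..Suc (k - i)}" unfolding inj_on_def
    proof (intro ballI impI)
      fix a b assume a: "a \<in> {..Suc (k - i)}" and b: "b \<in> {..Suc (k - i)}" and eq: "g a = g b"
      show "a = b"
      proof (cases "a \<le> k - i"; cases "b \<le> k - i")
        assume "a \<le> k - i" "b \<le> k - i"
        then have "f (i + a) = f (i + b)" using eq by (simp add: g_def)
        then have "i + a = i + b" using fpath_inj[OF p, of "i + a" "i + b"] \<open>a \<le> k - i\<close> \<open>b \<le> k - i\<close> ik by auto
        then show ?thesis by simp
      next
        assume "a \<le> k - i" "\<not> b \<le> k - i"
        then show ?thesis using eq z ik by (auto simp: g_def)
      next
        assume "\<not> a \<le> k - i" "b \<le> k - i"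
        then show ?thesis using eq z ik by (auto simp: g_def)
      next
        assume "\<not> a \<le> k - i" "\<not> b \<le> k - i"
        then show ?thesis using a b by auto
      qed
    qed
  qed
  moreover have "ET (g (Suc (k - i))) (g 0)" using e1 by (simp add: g_def)
  ultimately show False using cycle_fpath ik by fastforce
qed

definition Ravoid :: "'a \<Rightarrow> ('a \<times> 'a) set" where
  "Ravoid a = {(x, y). ET x y \<and> x \<noteq> a \<and> y \<noteq> a}"

lemma Ravoid_sym: "(c, d) \<in> (Ravoid a)\<^sup>* \<Longrightarrow> (d, c) \<in> (Ravoid a)\<^sup>*"
proof -
  have "sym (Ravoid a)" by (auto simp: Ravoid_def sym_def ET_sym)
  then have "sym ((Ravoid a)\<^sup>*)" by (rule sym_rtrancl)
  then show "(c, d) \<in> (Ravoid a)\<^sup>* \<Longrightarrow> (d, c) \<in> (Ravoid a)\<^sup>*" by (auto simp: sym_def)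
qed

lemma fwalk_avoid:
  assumes "fwalk ET f n" "\<And>i. i \<le> n \<Longrightarrow> f i \<noteq> a" "i \<le> k" "k \<le> n"
  shows "(f i, f k) \<in> (Ravoid a)\<^sup>*"
proof -
  have "fwalk (\<lambda>x y. ET x y \<and> x \<noteq> a \<and> y \<noteq> a) f n" using assms(1,2) by (auto simp: fwalk_def)
  from fwalk_rtrancl[OF this assms(3,4)] show ?thesis unfolding Ravoid_def .
qed

lemma sep_nbrs:
  assumes ac: "ET a c" and ad: "ET a d" and cd: "c \<noteq> d" and r: "(c, d) \<in> (Ravoid a)\<^sup>*"
  shows False
proof -
  obtain f n where f: "fwalk (\<lambda>x y. ET x y \<and> x \<noteq> a \<and> y \<noteq> a) f n" "f 0 = c" "f n = d"
    using rtrancl_fwalk[of c d "\<lambda>x y. ET x y \<and> x \<noteq> a \<and> y \<noteq> a"] r unfolding Ravoid_def by blast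
  have fa: "f i \<noteq> a" if "i \<le> n" for i
  proof (cases "i = n")
    case True
    then show ?thesis using f ac ET_irr cd by (cases n) (auto simp: fwalk_def)
  next
    case False then show ?thesis using f that by (auto simp: fwalk_def)
  qed
  obtain g m where g: "fpath (\<lambda>x y. ET x y \<and> x \<noteq> a \<and> y \<noteq> a) g m" "g 0 = c" "g m = d" "g ` {..m} \<subseteq> f ` {..n}"
    using fwalk_fpath[OF f(1)] f by auto
  have ga: "\<And>t. t \<le> m \<Longrightarrow> g t \<noteq> a" using g(4) fa by fastforce
  have m1: "1 \<le> m" using g cd by (cases m) auto
  define h where "h t = (if t = 0 then a else g (t - 1))" for t
  have "fpath ET h (Suc m)" unfolding fpath_def fwalk_def
  proof (intro conjI allI impI)
    fix t assume "t < Suc m"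
    then show "ET (h t) (h (Suc t))" using g ac by (cases t) (auto simp: h_def fpath_def fwalk_def)
  next
    show "inj_on h {..Suc m}" unfolding inj_on_def
    proof (intro ballI impI)
      fix s t assume s: "s \<in> {..Suc m}" and t: "t \<in> {..Suc m}" and eq: "h s = h t"
      show "s = t"
      proof (cases "s = 0"; cases "t = 0")
        assume "s \<noteq> 0" "t \<noteq> 0"
        then have "g (s - 1) = g (t - 1)" using eq by (simp add: h_def)
        then have "s - 1 = t - 1" using g(1) s t unfolding fpath_def inj_on_def by auto
        then show ?thesis using \<open>s \<noteq> 0\<close> \<open>t \<noteq> 0\<close> by simp
      next
        assume "s = 0" "t = 0" then show ?thesis by simp
      next
        assume "s = 0" "t \<noteq> 0"
        then have "g (t - 1) = a" using eq by (simp add: h_def)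
        moreover have "t - 1 \<le> m" using t by auto
        ultimately show ?thesis using ga by blast
      next
        assume "s \<noteq> 0" "t = 0"
        then have "g (s - 1) = a" using eq by (simp add: h_def)
        moreover have "s - 1 \<le> m" using s by auto
        ultimately show ?thesis using ga by blast
      qed
    qed
  qed
  moreover have "ET (h (Suc m)) (h 0)" using ad g ET_sym by (simp add: h_def)
  ultimately show False using cycle_fpath m1 by fastforce
qed

lemma path_unique:
  assumes "fpath ET f n" "fpath ET g m" "f 0 = g 0" "f n = g m"
  shows "n = m \<and> (\<forall>i\<le>n. f i = g i)"
  using assms
proof (induction n arbitrary: f g m)
  case 0
  then have "g m = g 0" by simp
  then have "m = 0" using 0(2) by (auto simp: fpath_def inj_on_def)
  then show ?case using 0 by simp
next
  case (Suc n)
  show ?case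
  proof (cases m)
    case 0
    then have "f (Suc n) = f 0" using Suc.prems by simp
    then show ?thesis using Suc.prems(1) by (auto simp: fpath_def inj_on_def)
  next
    case (Suc m')
    note m = this
    show ?thesis
    proof (cases "f 1 = g 1")
      case True
      have p1: "fpath ET (\<lambda>t. f (Suc t)) n" using Suc.prems(1) unfolding fpath_def fwalk_def inj_on_def by auto
      have p2: "fpath ET (\<lambda>t. g (Suc t)) m'" using Suc.prems(2) m unfolding fpath_def fwalk_def inj_on_def by auto
      have "n = m' \<and> (\<forall>i\<le>n. f (Suc i) = g (Suc i))"
        using Suc.IH[OF p1 p2] True Suc.prems(4) m by simp
      moreover have "\<forall>i\<le>Suc n. f i = g i"
      proof (intro allI impI)
        fix i assume "i \<le> Suc n"
        then show "f i = g i" using Suc.prems(3) \<open>n = m' \<and> (\<forall>i\<le>n. f (Suc i) = g (Suc i))\<close>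
          by (cases i) auto
      qed
      ultimately show ?thesis using m by simp
    next
      case False
      let ?a = "f 0"
      have fa: "\<And>i. i \<le> Suc n \<Longrightarrow> i \<noteq> 0 \<Longrightarrow> f i \<noteq> ?a" using Suc.prems(1) by (auto simp: fpath_def inj_on_def)
      have ga: "\<And>i. i \<le> m \<Longrightarrow> i \<noteq> 0 \<Longrightarrow> g i \<noteq> ?a" using Suc.prems(2,3) by (auto simp: fpath_def inj_on_def)
      have w1: "fwalk ET (\<lambda>t. f (Suc t)) n" using Suc.prems(1) by (auto simp: fpath_def fwalk_def)
      have r1: "(f 1, f (Suc n)) \<in> (Ravoid ?a)\<^sup>*"
        using fwalk_avoid[OF w1, of ?a 0 n] fa by auto
      have w2: "fwalk ET (\<lambda>t. g (Suc t)) m'" using Suc.prems(2) m by (auto simp: fpath_def fwalk_def)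
      have r2: "(g 1, g m) \<in> (Ravoid ?a)\<^sup>*"
        using fwalk_avoid[OF w2, of ?a 0 m'] ga m by auto
      have "(f 1, g 1) \<in> (Ravoid ?a)\<^sup>*" using r1 Ravoid_sym[OF r2] Suc.prems(4)
        by (metis rtrancl_trans)
      moreover have "ET ?a (f 1)" using Suc.prems(1) by (auto simp: fpath_def fwalk_def)
      moreover have "ET ?a (g 1)" using Suc.prems(2,3) m by (auto simp: fpath_def fwalk_def)
      ultimately show ?thesis using sep_nbrs False by blast
    qed
  qed
qed


lemma nb_inj:
  assumes w: "fwalk ET f n" and nb: "\<And>i. i + 2 \<le> n \<Longrightarrow> f (i + 2) \<noteq> f i"
  shows "inj_on f {..n}"
  using w nb
proof (induction n)
  case 0 then show ?case by simp
next
  case (Suc n)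
  have wn: "fwalk ET f n" using Suc.prems(1) by (auto simp: fwalk_def)
  have nbn: "\<And>i. i + 2 \<le> n \<Longrightarrow> f (i + 2) \<noteq> f i" using Suc.prems(2) by simp
  have inj: "inj_on f {..n}" by (rule Suc.IH[OF wn nbn])
  have notin: "f (Suc n) \<notin> f ` {..n}"
  proof
    assume "f (Suc n) \<in> f ` {..n}"
    then obtain i where i: "i \<le> n" "f i = f (Suc n)" by (metis atMost_iff imageE)
    have e: "ET (f n) (f (Suc n))" using Suc.prems(1) by (auto simp: fwalk_def)
    show False
    proof (cases "n - i \<le> 1")
      case True
      then consider "i = n" | "Suc i = n" using i by linarith
      then show False
      proof cases
        case 1 then show False using e i ET_irr by simp
      next
        case 2 then have "f (i + 2) = f i" using i by simp
        then show False using Suc.prems(2)[of i] 2 by simp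
      qed
    next
      case False
      let ?g = "\<lambda>t. f (i + t)"
      have "inj_on ?g {..n - i}"
      proof (rule inj_onI)
        fix x y assume "x \<in> {..n - i}" "y \<in> {..n - i}" "f (i + x) = f (i + y)"
        then have "i + x = i + y" using inj_onD[OF inj, of "i + x" "i + y"] i by auto
        then show "x = y" by simp
      qed
      moreover have "fwalk ET ?g (n - i)" using wn i by (auto simp: fwalk_def)
      ultimately have "fpath ET ?g (n - i)" by (simp add: fpath_def)
      moreover have "ET (?g (n - i)) (?g 0)" using e i by simp
      moreover have "2 \<le> n - i" using False by simp
      ultimately show False using cycle_fpath by blast
    qed
  qed
  have "{..Suc n} = insert (Suc n) {..n}" by auto
  then show ?case using inj notin by simp
qed

end


lemma gdist_exists_ge:
  assumes ex: "\<exists>n. (a, b) \<in> adj_rel E ^^ n"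
  shows "(a, b) \<in> adj_rel E ^^ gdist E a b"
  unfolding gdist_def using ex by (rule LeastI_ex)

lemma gdist_ge1:
  assumes ex: "\<exists>n. (a, b) \<in> adj_rel E ^^ n" and ne: "a \<noteq> b"
  shows "1 \<le> gdist E a b"
proof (rule ccontr)
  assume "\<not> 1 \<le> gdist E a b"
  then have "gdist E a b = 0" by simp
  then show False using gdist_exists_ge[OF ex] ne by simp
qed

lemma gdist_ge2:
  assumes ex: "\<exists>n. (a, b) \<in> adj_rel E ^^ n" and ne: "a \<noteq> b" and na: "\<not> E a b"
  shows "2 \<le> gdist E a b"
proof (rule ccontr)
  assume "\<not> 2 \<le> gdist E a b"
  then consider "gdist E a b = 0" | "gdist E a b = 1" by linarith
  then show False
  proof cases
    case 1 then show False using gdist_exists_ge[OF ex] ne by simp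
  next
    case 2 then show False using gdist_exists_ge[OF ex] na by (simp add: adj_rel_def)
  qed
qed

lemma gdist_ge3:
  assumes ex: "\<exists>n. (a, b) \<in> adj_rel E ^^ n" and ne: "a \<noteq> b" and na: "\<not> E a b"
    and nc: "\<And>z. E a z \<Longrightarrow> E z b \<Longrightarrow> False"
  shows "3 \<le> gdist E a b"
proof (rule ccontr)
  assume "\<not> 3 \<le> gdist E a b"
  then consider "gdist E a b = 0" | "gdist E a b = 1" | "gdist E a b = 2" by linarith
  then show False
  proof cases
    case 1 then show False using gdist_exists_ge[OF ex] ne by simp
  next
    case 2 then show False using gdist_exists_ge[OF ex] na by (simp add: adj_rel_def)
  next
    case 3
    then have "(a, b) \<in> adj_rel E ^^ Suc (Suc 0)" using gdist_exists_ge[OF ex] by (simp add: numeral_2_eq_2)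
    then obtain z where "(a, z) \<in> adj_rel E" "(z, b) \<in> adj_rel E"
      by (auto simp: relpow_Suc_D2 elim!: relpow_Suc_E2)
    then show False using nc by (auto simp: adj_rel_def)
  qed
qed

locale halin_ctx = tree_ctx +
  fixes rot :: "'a \<Rightarrow> 'a \<Rightarrow> 'a"
  assumes rs: "rotation_system V ET rot"
begin

definition par :: "'a \<Rightarrow> 'a" where "par l = (THE u. ET l u)"

abbreviation F where "F \<equiv> face_step rot"

definition fw :: "'a \<Rightarrow> nat \<Rightarrow> 'a" where
  "fw l i = fst ((F ^^ i) (l, par l))"

lemma rs_at: "v \<in> V \<Longrightarrow> bij_betw (rot v) (nbrs ET v) (nbrs ET v)
      \<and> (\<forall>u\<in>nbrs ET v. \<forall>w\<in>nbrs ET v. \<exists>n. (rot v ^^ n) u = w)"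
proof -
  assume v: "v \<in> V"
  have "\<forall>v\<in>V. bij_betw (rot v) (nbrs ET v) (nbrs ET v)
      \<and> (\<forall>u\<in>nbrs ET v. \<forall>w\<in>nbrs ET v. \<exists>n. (rot v ^^ n) u = w)"
    using rs by (simp only: rotation_system_def)
  from bspec[OF this v] show ?thesis .
qed

lemma rot_bij: "v \<in> V \<Longrightarrow> bij_betw (rot v) (nbrs ET v) (nbrs ET v)"
  using rs_at by (rule conjunct1)

lemma rot_orb: "v \<in> V \<Longrightarrow> a \<in> nbrs ET v \<Longrightarrow> w \<in> nbrs ET v \<Longrightarrow> \<exists>n. (rot v ^^ n) a = w"
proof -
  assume "v \<in> V" "a \<in> nbrs ET v" "w \<in> nbrs ET v"
  from conjunct2[OF rs_at[OF this(1)]] this(2,3) show ?thesis by blast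
qed

lemma rot_in: "ET v a \<Longrightarrow> ET v (rot v a)"
proof -
  assume e: "ET v a"
  then have "v \<in> V" using ET_V by auto
  then have "rot v ` nbrs ET v = nbrs ET v" using rot_bij bij_betw_imp_surj_on by blast
  then show ?thesis using e by (auto simp: nbrs_def)
qed

lemma rot_inj: "ET v a \<Longrightarrow> ET v b \<Longrightarrow> rot v a = rot v b \<Longrightarrow> a = b"
proof -
  assume e: "ET v a" "ET v b" "rot v a = rot v b"
  then have "v \<in> V" using ET_V by auto
  then have "inj_on (rot v) (nbrs ET v)" using rot_bij bij_betw_imp_inj_on by blast
  then show ?thesis using e by (auto simp: nbrs_def inj_on_def)
qed

lemma orbit2:
  assumes va: "ET v a" and vb: "ET v b" and ab: "rot v a = b" and ba: "rot v b = a"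
  shows "nbrs ET v = {a, b}"
proof
  have vV: "v \<in> V" using va ET_V by auto
  have it: "(rot v ^^ n) a \<in> {a, b}" for n
    by (induction n) (use ab ba in auto)
  show "nbrs ET v \<subseteq> {a, b}"
  proof
    fix w assume "w \<in> nbrs ET v"
    then obtain n where "(rot v ^^ n) a = w" using rot_orb[OF vV] va by (auto simp: nbrs_def)
    then show "w \<in> {a, b}" using it by metis
  qed
  show "{a, b} \<subseteq> nbrs ET v" using va vb by (auto simp: nbrs_def)
qed

lemma finN: "finite (nbrs ET v)"
proof -
  have "nbrs ET v \<subseteq> V" using ET_V by (auto simp: nbrs_def)
  then show ?thesis using finV finite_subset by blast
qed

lemma leaf_nbrs: "is_leaf ET l \<Longrightarrow> nbrs ET l = {par l}"
proof -
  assume "is_leaf ET l"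
  then have "card (nbrs ET l) = 1" by (simp add: is_leaf_def deg_def)
  then obtain u where u: "nbrs ET l = {u}" by (auto simp: card_Suc_eq)
  then have "ET l u" "\<And>w. ET l w \<Longrightarrow> w = u" by (auto simp: nbrs_def)
  then have "par l = u" unfolding par_def by (rule the_equality)
  then show ?thesis using u by simp
qed

lemma leaf_par: "is_leaf ET l \<Longrightarrow> ET l (par l)"
  using leaf_nbrs by (auto simp: nbrs_def)

lemma leaf_V: "is_leaf ET l \<Longrightarrow> l \<in> V"
  using leaf_par ET_V by blast

lemma leaf_only: "is_leaf ET l \<Longrightarrow> ET l w \<Longrightarrow> w = par l"
  using leaf_nbrs by (auto simp: nbrs_def)

lemma nonleaf_of_fix: "ET v a \<Longrightarrow> rot v a = a \<Longrightarrow> is_leaf ET v"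
proof -
  assume e: "ET v a" "rot v a = a"
  have "nbrs ET v = {a, a}" by (rule orbit2) (use e in auto)
  then show ?thesis by (simp add: is_leaf_def deg_def)
qed

lemma F_pow_Suc: "(F ^^ Suc i) d = F ((F ^^ i) d)" by simp

lemma fw_snd: "snd ((F ^^ i) (l, par l)) = fw l (Suc i)"
  by (simp add: fw_def face_step_def)

lemma fw_rec: "fw l (Suc (Suc i)) = rot (fw l (Suc i)) (fw l i)"
proof -
  have "fw l (Suc (Suc i)) = snd ((F ^^ Suc i) (l, par l))" by (rule fw_snd[symmetric])
  also have "\<dots> = rot (snd ((F ^^ i) (l, par l))) (fst ((F ^^ i) (l, par l)))"
    by (simp add: face_step_def)
  finally show ?thesis by (simp add: fw_snd fw_def)
qed

lemma fw0: "fw l 0 = l" by (simp add: fw_def)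
lemma fw1: "fw l (Suc 0) = par l" by (simp add: fw_def face_step_def)

lemma fw_edge:
  assumes "is_leaf ET l"
  shows "ET (fw l i) (fw l (Suc i))"
proof (induction i rule: nat_less_induct)
  case (1 i)
  show ?case
  proof (cases i)
    case 0 then show ?thesis using leaf_par[OF assms] by (simp add: fw0 fw1)
  next
    case (Suc k)
    then have "ET (fw l k) (fw l (Suc k))" using 1 by simp
    then have "ET (fw l (Suc k)) (rot (fw l (Suc k)) (fw l k))" using ET_sym rot_in by blast
    then show ?thesis using Suc by (simp add: fw_rec)
  qed
qed

lemma fw_V: "is_leaf ET l \<Longrightarrow> fw l i \<in> V"
  using fw_edge ET_V by blast

lemma fw_nb:
  assumes l: "is_leaf ET l" and nl: "\<not> is_leaf ET (fw l (Suc i))"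
  shows "fw l (Suc (Suc i)) \<noteq> fw l i"
proof
  assume eq: "fw l (Suc (Suc i)) = fw l i"
  have "ET (fw l (Suc i)) (fw l i)" using fw_edge[OF l, of i] ET_sym by blast
  moreover have "rot (fw l (Suc i)) (fw l i) = fw l i" using eq by (simp add: fw_rec)
  ultimately show False using nonleaf_of_fix nl by blast
qed

definition NL :: "'a \<Rightarrow> nat" where
  "NL l = (LEAST n. 1 \<le> n \<and> is_leaf ET (fw l n))"

lemma NL_ex:
  assumes l: "is_leaf ET l"
  shows "\<exists>n. 1 \<le> n \<and> is_leaf ET (fw l n)"
proof (rule ccontr)
  assume "\<not> ?thesis"
  then have nl: "\<And>n. 1 \<le> n \<Longrightarrow> \<not> is_leaf ET (fw l n)" by blast
  let ?M = "card V"
  have "fwalk ET (fw l) ?M" using fw_edge[OF l] by (simp add: fwalk_def)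
  moreover have "\<And>i. i + 2 \<le> ?M \<Longrightarrow> fw l (i + 2) \<noteq> fw l i"
    using fw_nb[OF l] nl by (simp add: numeral_2_eq_2)
  ultimately have "inj_on (fw l) {..?M}" by (rule nb_inj)
  then have "card (fw l ` {..?M}) = Suc ?M" by (simp add: card_image)
  moreover have "fw l ` {..?M} \<subseteq> V" using fw_V[OF l] by auto
  then have "card (fw l ` {..?M}) \<le> card V" by (rule card_mono[OF finV])
  ultimately show False by simp
qed

lemma NL_both: "is_leaf ET l \<Longrightarrow> 1 \<le> NL l \<and> is_leaf ET (fw l (NL l))"
  unfolding NL_def by (rule LeastI_ex[OF NL_ex])

lemma NL_ge1: "is_leaf ET l \<Longrightarrow> 1 \<le> NL l"
  using NL_both by blast

lemma NL_leaf: "is_leaf ET l \<Longrightarrow> is_leaf ET (fw l (NL l))"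
  using NL_both by blast

lemma NL_min: "is_leaf ET l \<Longrightarrow> 1 \<le> m \<Longrightarrow> m < NL l \<Longrightarrow> \<not> is_leaf ET (fw l m)"
  unfolding NL_def using not_less_Least[of m "\<lambda>n. 1 \<le> n \<and> is_leaf ET (fw l n)"] by auto

lemma next_leaf_eq: "next_leaf ET rot l = fw l (NL l)"
  unfolding next_leaf_def Let_def fw_def NL_def par_def ..

lemma fw_path:
  assumes l: "is_leaf ET l"
  shows "fpath ET (fw l) (NL l)"
proof -
  have w: "fwalk ET (fw l) (NL l)" using fw_edge[OF l] by (simp add: fwalk_def)
  have "\<And>i. i + 2 \<le> NL l \<Longrightarrow> fw l (i + 2) \<noteq> fw l i"
  proof -
    fix i assume "i + 2 \<le> NL l"
    then have "\<not> is_leaf ET (fw l (Suc i))" using NL_min[OF l] by simp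
    then show "fw l (i + 2) \<noteq> fw l i" using fw_nb[OF l] by (simp add: numeral_2_eq_2)
  qed
  then show ?thesis using nb_inj[OF w] w by (simp add: fpath_def)
qed

lemma nl_leaf: "is_leaf ET l \<Longrightarrow> is_leaf ET (next_leaf ET rot l)"
  using NL_leaf next_leaf_eq by simp

lemma nl_ne: "is_leaf ET l \<Longrightarrow> next_leaf ET rot l \<noteq> l"
proof
  assume l: "is_leaf ET l" and eq: "next_leaf ET rot l = l"
  then have "fw l (NL l) = fw l 0" by (simp add: next_leaf_eq fw0)
  then have "NL l = 0" using fpath_inj[OF fw_path[OF l]] by auto
  then show False using NL_ge1[OF l] by simp
qed

lemma F_dart: "ET (fst d) (snd d) \<Longrightarrow> ET (fst (F d)) (snd (F d))"
  using rot_in ET_sym by (auto simp: face_step_def)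

lemma Fpow_dart: "ET (fst d) (snd d) \<Longrightarrow> ET (fst ((F ^^ k) d)) (snd ((F ^^ k) d))"
  by (induction k) (auto simp: F_dart)

lemma F_inj: "ET (fst d) (snd d) \<Longrightarrow> ET (fst e) (snd e) \<Longrightarrow> F d = F e \<Longrightarrow> d = e"
proof -
  assume d: "ET (fst d) (snd d)" and e: "ET (fst e) (snd e)" and eq: "F d = F e"
  then have s: "snd d = snd e" by (simp add: face_step_def)
  then have "rot (snd d) (fst d) = rot (snd d) (fst e)" using eq by (simp add: face_step_def)
  then have "fst d = fst e" using rot_inj d e s ET_sym by metis
  then show ?thesis using s by (simp add: prod_eq_iff)
qed

lemma Fpow_inj: "ET (fst d) (snd d) \<Longrightarrow> ET (fst e) (snd e) \<Longrightarrow> (F ^^ k) d = (F ^^ k) e \<Longrightarrow> d = e"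
proof (induction k)
  case 0 then show ?case by simp
next
  case (Suc k)
  have "(F ^^ k) d = (F ^^ k) e" using F_inj[OF Fpow_dart[OF Suc.prems(1)] Fpow_dart[OF Suc.prems(2)]] Suc.prems(3) by simp
  then show ?case using Suc by blast
qed

lemma F_end:
  assumes l: "is_leaf ET l"
  shows "(F ^^ NL l) (l, par l) = (next_leaf ET rot l, par (next_leaf ET rot l))"
proof -
  let ?m = "next_leaf ET rot l"
  have m: "is_leaf ET ?m" using nl_leaf[OF l] .
  have f: "fst ((F ^^ NL l) (l, par l)) = ?m" using next_leaf_eq by (simp add: fw_def)
  have "snd ((F ^^ NL l) (l, par l)) = fw l (Suc (NL l))" by (rule fw_snd)
  moreover have "ET ?m (fw l (Suc (NL l)))" using fw_edge[OF l, of "NL l"] next_leaf_eq by simp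
  ultimately have "snd ((F ^^ NL l) (l, par l)) = par ?m" using leaf_only[OF m] by simp
  then show ?thesis using f by (simp add: prod_eq_iff)
qed

lemma nl_inj_aux:
  assumes l1: "is_leaf ET l1" and l2: "is_leaf ET l2" and eq: "next_leaf ET rot l1 = next_leaf ET rot l2"
    and le: "NL l1 \<le> NL l2"
  shows "l1 = l2"
proof -
  let ?d1 = "(l1, par l1)" and ?d2 = "(l2, par l2)"
  have d1: "ET (fst ?d1) (snd ?d1)" using leaf_par[OF l1] by simp
  have d2: "ET (fst ?d2) (snd ?d2)" using leaf_par[OF l2] by simp
  have "(F ^^ NL l1) ?d1 = (F ^^ NL l2) ?d2" using F_end[OF l1] F_end[OF l2] eq by simp
  also have "(F ^^ NL l2) ?d2 = (F ^^ NL l1) ((F ^^ (NL l2 - NL l1)) ?d2)"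
  proof -
    have "NL l2 = NL l1 + (NL l2 - NL l1)" using le by simp
    then show ?thesis by (metis funpow_add comp_apply)
  qed
  finally have "?d1 = (F ^^ (NL l2 - NL l1)) ?d2"
    using Fpow_inj[OF d1 Fpow_dart[OF d2]] by blast
  then have "fst ?d1 = fst ((F ^^ (NL l2 - NL l1)) ?d2)" by (rule arg_cong)
  then have l1eq: "l1 = fw l2 (NL l2 - NL l1)" by (simp add: fw_def)
  show ?thesis
  proof (cases "NL l2 - NL l1 = 0")
    case True then show ?thesis using l1eq by (simp add: fw0)
  next
    case False
    then have "\<not> is_leaf ET (fw l2 (NL l2 - NL l1))"
      using NL_min[OF l2] NL_ge1[OF l1] by simp
    then show ?thesis using l1 l1eq by simp
  qed
qed

lemma nl_inj:
  assumes "is_leaf ET l1" "is_leaf ET l2" "next_leaf ET rot l1 = next_leaf ET rot l2"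
  shows "l1 = l2"
  using nl_inj_aux[OF assms] nl_inj_aux[OF assms(2,1) assms(3)[symmetric]] by (metis nat_le_linear)

lemma nl_surj:
  assumes p: "is_leaf ET p"
  shows "\<exists>s. is_leaf ET s \<and> next_leaf ET rot s = p"
proof -
  let ?L = "{l \<in> V. is_leaf ET l}"
  have "finite ?L" using finV by auto
  moreover have "next_leaf ET rot ` ?L \<subseteq> ?L" using nl_leaf leaf_V by auto
  moreover have "inj_on (next_leaf ET rot) ?L" using nl_inj by (auto simp: inj_on_def)
  ultimately have "next_leaf ET rot ` ?L = ?L" by (rule endo_inj_surj)
  moreover have "p \<in> ?L" using p leaf_V by auto
  ultimately show ?thesis by (metis (no_types, lifting) imageE mem_Collect_eq)
qed

end


context curv_edge
begin

lemma lip_helper: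
  assumes "a = b \<or> (1 \<le> gdist E a b \<and> g a - g b \<le> 1) \<or> (2 \<le> gdist E a b \<and> g a - g b \<le> 2) \<or> (3 \<le> gdist E a b \<and> g a - g b \<le> 3)"
  shows "g a - g b \<le> real (gdist E a b)"
  using assms by auto

lemma pq_crit:
  assumes conn: "\<And>a b. a \<in> V \<Longrightarrow> b \<in> V \<Longrightarrow> \<exists>n. (a, b) \<in> adj_rel E ^^ n"
    and V6: "a1 \<in> V" "b1 \<in> V" "s \<in> V" "r \<in> V"
    and dist: "distinct [u, v, a1, b1, s, r]"
    and Nu: "nbrs E u = {a1, v, s}" and Nv: "nbrs E v = {b1, r, u}"
    and d1: "2 \<le> gdist E a1 v" and d2: "2 \<le> gdist E a1 r" and d3: "3 \<le> gdist E a1 b1"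
    and d4: "2 \<le> gdist E u b1" and d5: "2 \<le> gdist E s b1"
  shows "kappa_LLY V E u v \<le> 0"
proof -
  define g :: "'a \<Rightarrow> real" where
    "g w = (if w = u then 1 else if w = v then 0 else if w = a1 then 2 else if w = b1 then -1 else if w = s then 1 else 0)" for w
  let ?S = "{u, v, a1, b1, s, r}"
  have gv: "g u = 1" "g v = 0" "g a1 = 2" "g b1 = -1" "g s = 1" "g r = 0"
    using dist by (auto simp: g_def)
  have SV: "?S \<subseteq> V" using V6 uV vV by auto
  have g1: "1 \<le> gdist E a b" if "a \<in> V" "b \<in> V" "a \<noteq> b" for a b
    using gdist_ge1[OF conn[OF that(1,2)] that(3)] .
  have lip: "g a - g b \<le> real (gdist E a b)" if a: "a \<in> ?S" and b: "b \<in> ?S" for a b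
  proof (rule lip_helper)
    have aV: "a \<in> V" and bV: "b \<in> V" using a b SV by auto
    show "a = b \<or> (1 \<le> gdist E a b \<and> g a - g b \<le> 1) \<or> (2 \<le> gdist E a b \<and> g a - g b \<le> 2) \<or> (3 \<le> gdist E a b \<and> g a - g b \<le> 3)"
    proof (cases "a = b")
      case False
      then have "1 \<le> gdist E a b" using g1 aV bV by blast
      then show ?thesis using a b gv d1 d2 d3 d4 d5 by auto
    qed simp
  qed
  have S: "{u, v} \<union> nbrs E u \<union> nbrs E v \<subseteq> ?S" using Nu Nv by auto
  have du: "deg E u = 3" using Nu dist by (auto simp: deg_def card_insert_if)
  have dv: "deg E v = 3" using Nv dist by (auto simp: deg_def card_insert_if)
  have su: "(\<Sum>w\<in>nbrs E u. g w) = 3" using Nu dist gv by (auto simp: sum.insert_if)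
  have sv: "(\<Sum>w\<in>nbrs E v. g w) = 0" using Nv dist gv by (auto simp: sum.insert_if)
  show ?thesis
    by (rule kappa_nonpos[OF S lip]) (auto simp: gv du dv su sv)
qed

lemma xb_crit:
  assumes conn: "\<And>a b. a \<in> V \<Longrightarrow> b \<in> V \<Longrightarrow> \<exists>n. (a, b) \<in> adj_rel E ^^ n"
    and sym: "\<And>a b. E a b \<Longrightarrow> E b a"
    and V2: "v2 \<in> V"
    and Nv: "nbrs E v = {u, v2}" and uv2: "u \<noteq> v2"
    and d_uv2: "2 \<le> gdist E u v2"
    and w0: "w0 \<in> nbrs E u" "w0 \<noteq> v"
    and d_w0: "3 \<le> gdist E w0 v2"
    and d_w: "\<And>w. w \<in> nbrs E u \<Longrightarrow> w \<noteq> v \<Longrightarrow> 2 \<le> gdist E w v2"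
  shows "kappa_LLY V E u v \<le> 0"
proof -
  define g :: "'a \<Rightarrow> real" where
    "g w = (if w = u then 1 else if w = v then 0 else if w = v2 then -1 else if w = w0 then 2 else 1)" for w
  let ?S = "{u, v, v2} \<union> nbrs E u"
  have vv2: "v \<noteq> v2" using Nv irr by (auto simp: nbrs_def)
  have w0u: "w0 \<noteq> u" using w0 irr by (auto simp: nbrs_def)
  have w0V: "w0 \<in> V" using w0 NV by auto
  have v2N: "v2 \<notin> nbrs E u"
  proof
    assume "v2 \<in> nbrs E u"
    then have "gdist E u v2 \<le> 1" using gdist_adj_le1 by (auto simp: nbrs_def)
    then show False using d_uv2 by simp
  qed
  have w0v2: "w0 \<noteq> v2" using w0 v2N by auto
  have gv: "g u = 1" "g v = 0" "g v2 = -1" "g w0 = 2"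
    using uv2 vv2 w0 w0u w0v2 irr uv by (auto simp: g_def)
  have gN: "g w = 1" if "w \<in> nbrs E u" "w \<noteq> v" "w \<noteq> w0" for w
    using that v2N irr by (auto simp: g_def nbrs_def)
  have SV: "?S \<subseteq> V" using V2 uV vV NV by auto
  have g1: "1 \<le> gdist E a b" if "a \<in> V" "b \<in> V" "a \<noteq> b" for a b
    using gdist_ge1[OF conn[OF that(1,2)] that(3)] .
  have d_w0v: "2 \<le> gdist E w0 v"
  proof (rule gdist_ge2[OF conn[OF w0V vV]])
    show "w0 \<noteq> v" using w0 by simp
    show "\<not> E w0 v"
    proof
      assume "E w0 v" then have "w0 \<in> nbrs E v" using sym by (auto simp: nbrs_def)
      then show False using Nv w0u w0v2 by auto
    qed
  qed
  have gle2: "g a \<le> 2" for a by (auto simp: g_def)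
  have lip: "g a - g b \<le> real (gdist E a b)" if a: "a \<in> ?S" and b: "b \<in> ?S" for a b
  proof (cases "a = b")
    case True then show ?thesis by simp
  next
    case False
    have aV: "a \<in> V" and bV: "b \<in> V" using a b SV by auto
    have one: "1 \<le> gdist E a b" using g1 aV bV False by blast
    show ?thesis
    proof (cases "b = v2")
      case bv2: True
      show ?thesis
      proof (cases "a = u")
        case True then show ?thesis using gv bv2 d_uv2 by simp
      next
        case au: False
        show ?thesis
        proof (cases "a = w0")
          case True then show ?thesis using gv bv2 d_w0 by simp
        next
          case aw0: False
          show ?thesis
          proof (cases "a = v")
            case True then show ?thesis using gv bv2 one by simp
          next
            case False
            then have "a \<in> nbrs E u" using a au bv2 \<open>a \<noteq> b\<close> by auto
            then have "2 \<le> gdist E a v2" "g a = 1" using d_w gN False aw0 by auto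
            then show ?thesis using gv bv2 by simp
          qed
        qed
      qed
    next
      case bnv2: False
      show ?thesis
      proof (cases "b = v")
        case bv: True
        show ?thesis
        proof (cases "a = w0")
          case True then show ?thesis using gv bv d_w0v by simp
        next
          case False
          then have "g a \<le> 1" using a by (auto simp: g_def)
          then show ?thesis using gv bv one by simp
        qed
      next
        case bnv: False
        have "g b \<ge> 1" using b bnv bnv2 by (auto simp: g_def)
        then show ?thesis using gle2[of a] one by simp
      qed
    qed
  qed
  have S: "{u, v} \<union> nbrs E u \<union> nbrs E v \<subseteq> ?S" using Nv by auto
  have dv: "deg E v = 2" using Nv uv2 by (simp add: deg_def)
  have sv: "(\<Sum>w\<in>nbrs E v. g w) = 0" using Nv uv2 gv by simp
  have vN: "v \<in> nbrs E u" using uv by (simp add: nbrs_def)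
  have su: "(\<Sum>w\<in>nbrs E u. g w) = real (deg E u)"
  proof -
    let ?N = "nbrs E u"
    have fN: "finite ?N" by (rule finN)
    have "(\<Sum>w\<in>?N. g w) = g v + (\<Sum>w\<in>?N - {v}. g w)" using fN vN by (rule sum.remove)
    also have "(\<Sum>w\<in>?N - {v}. g w) = g w0 + (\<Sum>w\<in>?N - {v} - {w0}. g w)"
      using fN w0 by (intro sum.remove) auto
    also have "(\<Sum>w\<in>?N - {v} - {w0}. g w) = (\<Sum>w\<in>?N - {v} - {w0}. 1)"
      using gN by (intro sum.cong) auto
    also have "\<dots> = real (card ?N - 2)"
    proof -
      have "card (?N - {v} - {w0}) = card ?N - 2" using fN vN w0 by (simp add: card_Diff_singleton)
      then show ?thesis by simp
    qed
    finally have "(\<Sum>w\<in>?N. g w) = 2 + real (card ?N - 2)" using gv by simp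
    moreover have "2 \<le> card ?N"
    proof -
      have "{v, w0} \<subseteq> ?N" using vN w0 by auto
      then have "card {v, w0} \<le> card ?N" by (rule card_mono[OF fN])
      then show ?thesis using w0 by simp
    qed
    ultimately show ?thesis by (simp add: deg_def of_nat_diff)
  qed
  have dupos: "0 < real (deg E u)" using degu by simp
  show ?thesis
    by (rule kappa_nonpos[OF S lip]) (use gv dv su sv dupos in auto)
qed

end


lemma fpath_restrict: "fpath E f n \<Longrightarrow> k \<le> n \<Longrightarrow> fpath E f k"
  unfolding fpath_def fwalk_def inj_on_def by auto

lemma fpath_rev:
  assumes p: "fpath E f n" and sym: "\<And>a b. E a b \<Longrightarrow> E b a"
  shows "fpath E (\<lambda>t. f (n - t)) n"
  unfolding fpath_def fwalk_def
proof (intro conjI allI impI)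
  fix i assume i: "i < n"
  have "E (f (n - Suc i)) (f (Suc (n - Suc i)))" using p i by (auto simp: fpath_def fwalk_def)
  moreover have "Suc (n - Suc i) = n - i" using i by simp
  ultimately show "E (f (n - i)) (f (n - Suc i))" using sym by metis
next
  show "inj_on (\<lambda>t. f (n - t)) {..n}"
  proof (rule inj_onI)
    fix a b assume a: "a \<in> {..n}" and b: "b \<in> {..n}" and e: "f (n - a) = f (n - b)"
    have "n - a = n - b" using inj_onD[of f "{..n}" "n - a" "n - b"] p e by (auto simp: fpath_def)
    then show "a = b" using a b by auto
  qed
qed

context halin_ctx
begin

abbreviation G where "G \<equiv> halin_edges ET rot"

lemma cyc_leaves: "cycle_edge ET rot a b \<Longrightarrow> is_leaf ET a \<and> is_leaf ET b"
  by (simp add: cycle_edge_def)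

lemma G_sym: "G a b \<Longrightarrow> G b a"
  using ET_sym by (auto simp: halin_edges_def cycle_edge_def)

lemma G_irr: "\<not> G a a"
  using ET_irr nl_ne by (auto simp: halin_edges_def cycle_edge_def)

lemma G_V: "G a b \<Longrightarrow> a \<in> V \<and> b \<in> V"
  using ET_V leaf_V by (auto simp: halin_edges_def cycle_edge_def)

lemma G_ET: "ET a b \<Longrightarrow> G a b" by (simp add: halin_edges_def)

lemma G_nl1: "\<not> is_leaf ET a \<Longrightarrow> G a b \<longleftrightarrow> ET a b"
  by (auto simp: halin_edges_def cycle_edge_def)

lemma G_nl2: "\<not> is_leaf ET b \<Longrightarrow> G a b \<longleftrightarrow> ET a b"
  by (auto simp: halin_edges_def cycle_edge_def)

lemma nbrs_G_nl: "\<not> is_leaf ET v \<Longrightarrow> nbrs G v = nbrs ET v"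
  using G_nl1 by (auto simp: nbrs_def)

lemma G_conn: "a \<in> V \<Longrightarrow> b \<in> V \<Longrightarrow> \<exists>n. (a, b) \<in> adj_rel G ^^ n"
proof -
  assume ab: "a \<in> V" "b \<in> V"
  have "(a, b) \<in> (adj_rel ET)\<^sup>*" using conn ab .
  moreover have "adj_rel ET \<subseteq> adj_rel G" by (auto simp: adj_rel_def halin_edges_def)
  ultimately have "(a, b) \<in> (adj_rel G)\<^sup>*" using rtrancl_mono by blast
  then show ?thesis by (simp add: rtrancl_power)
qed

lemma nbrs_G_leaf:
  assumes p: "is_leaf ET p" and s: "is_leaf ET s" and sp: "next_leaf ET rot s = p"
  shows "nbrs G p = {par p, next_leaf ET rot p, s}"
proof
  show "nbrs G p \<subseteq> {par p, next_leaf ET rot p, s}"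
  proof
    fix w assume "w \<in> nbrs G p"
    then have "ET p w \<or> cycle_edge ET rot p w" by (simp add: nbrs_def halin_edges_def)
    then show "w \<in> {par p, next_leaf ET rot p, s}"
    proof
      assume "ET p w" then show ?thesis using leaf_only[OF p] by simp
    next
      assume c: "cycle_edge ET rot p w"
      then have wl: "is_leaf ET w" and "next_leaf ET rot p = w \<or> next_leaf ET rot w = p"
        by (auto simp: cycle_edge_def)
      then show ?thesis using nl_inj[OF wl s] sp by auto
    qed
  qed
  show "{par p, next_leaf ET rot p, s} \<subseteq> nbrs G p"
    using leaf_par[OF p] p s sp nl_leaf[OF p]
    by (auto simp: nbrs_def halin_edges_def cycle_edge_def)
qed

lemma curv_inst: "G u v \<Longrightarrow> curv_edge V G u v"
  unfolding curv_edge_def using finV G_V G_irr G_sym by blast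

lemma nonleaf_inner: "is_leaf ET l \<Longrightarrow> 0 < i \<Longrightarrow> i < NL l \<Longrightarrow> \<not> is_leaf ET (fw l i)"
  using NL_min by simp

end

locale main_ctx = halin_ctx +
  fixes x p s :: 'a
  assumes xV: "x \<in> V" and deg3: "3 \<le> deg ET x"
    and pleaf: "is_leaf ET p" and sleaf: "is_leaf ET s" and snl: "next_leaf ET rot s = p"
    and sep: "(p, next_leaf ET rot p) \<notin> (Ravoid x)\<^sup>*"
    and curv: "\<And>u v. G u v \<Longrightarrow> 0 < kappa_LLY V G u v"
begin

abbreviation "q \<equiv> next_leaf ET rot p"
abbreviation "r \<equiv> next_leaf ET rot q"
abbreviation "W \<equiv> fw p"
abbreviation "n \<equiv> NL p"
abbreviation "B \<equiv> fw q"
abbreviation "nB \<equiv> NL q"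
abbreviation "C \<equiv> fw s"
abbreviation "nC \<equiv> NL s"

lemma qleaf: "is_leaf ET q" using nl_leaf[OF pleaf] .
lemma rleaf: "is_leaf ET r" using nl_leaf[OF qleaf] .
lemma W0: "W 0 = p" by (simp add: fw0)
lemma Wn: "W n = q" by (simp add: next_leaf_eq)
lemma B0: "B 0 = q" by (simp add: fw0)
lemma BnB: "B nB = r" by (simp add: next_leaf_eq)
lemma C0: "C 0 = s" by (simp add: fw0)
lemma CnC: "C nC = p" using snl by (simp add: next_leaf_eq)
lemma Wp: "fpath ET W n" using fw_path[OF pleaf] .
lemma Bp: "fpath ET B nB" using fw_path[OF qleaf] .
lemma Cp: "fpath ET C nC" using fw_path[OF sleaf] .
lemma Wi: "0 < i \<Longrightarrow> i < n \<Longrightarrow> \<not> is_leaf ET (W i)" using nonleaf_inner[OF pleaf] .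
lemma Bi: "0 < i \<Longrightarrow> i < nB \<Longrightarrow> \<not> is_leaf ET (B i)" using nonleaf_inner[OF qleaf] .
lemma Ci: "0 < i \<Longrightarrow> i < nC \<Longrightarrow> \<not> is_leaf ET (C i)" using nonleaf_inner[OF sleaf] .
lemma WE: "ET (W i) (W (Suc i))" using fw_edge[OF pleaf] .
lemma BE: "ET (B i) (B (Suc i))" using fw_edge[OF qleaf] .
lemma CE: "ET (C i) (C (Suc i))" using fw_edge[OF sleaf] .
lemma WV: "W i \<in> V" using fw_V[OF pleaf] .
lemma n1: "1 \<le> n" using NL_ge1[OF pleaf] .
lemma nB1: "1 \<le> nB" using NL_ge1[OF qleaf] .
lemma nC1: "1 \<le> nC" using NL_ge1[OF sleaf] .

lemma xnl: "\<not> is_leaf ET x" using deg3 by (simp add: is_leaf_def)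

lemma x_not2: "nbrs ET x \<noteq> {a, b}"
proof
  assume "nbrs ET x = {a, b}"
  then have "deg ET x \<le> 2" by (simp add: deg_def card_insert_le_m1)
  then show False using deg3 by simp
qed

lemma x_on_W: "\<exists>j\<le>n. W j = x"
proof (rule ccontr)
  assume "\<not> ?thesis"
  then have "\<And>i. i \<le> n \<Longrightarrow> W i \<noteq> x" by blast
  then have "(W 0, W n) \<in> (Ravoid x)\<^sup>*"
    using fwalk_avoid[of W n x 0 n] Wp by (auto simp: fpath_def)
  then show False using sep W0 Wn by simp
qed

definition j where "j = (SOME j. j \<le> n \<and> W j = x)"

lemma j: "j \<le> n" "W j = x"
  using someI_ex[OF x_on_W] unfolding j_def by auto

lemma j0: "0 < j"
proof (rule ccontr)
  assume "\<not> 0 < j" then have "x = p" using j W0 by simp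
  then show False using pleaf xnl by simp
qed

lemma jn: "j < n"
proof (rule ccontr)
  assume "\<not> j < n" then have "x = q" using j Wn by simp
  then show False using qleaf xnl by simp
qed

lemma W_G_adj:
  assumes i: "i \<le> n" and k: "k \<le> n" and e: "G (W i) (W k)"
  shows "k = Suc i \<or> i = Suc k \<or> (i = 0 \<and> k = n) \<or> (i = n \<and> k = 0)"
proof -
  from e have "ET (W i) (W k) \<or> cycle_edge ET rot (W i) (W k)" by (simp add: halin_edges_def)
  then show ?thesis
  proof
    assume "ET (W i) (W k)" then show ?thesis using no_chord[OF Wp i k] by blast
  next
    assume c: "cycle_edge ET rot (W i) (W k)"
    then have l: "is_leaf ET (W i)" "is_leaf ET (W k)" by (auto simp: cycle_edge_def)
    then have "i = 0 \<or> i = n" "k = 0 \<or> k = n" using Wi i k by (meson le_neq_implies_less not_gr0)+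
    moreover have "i \<noteq> k" using c G_irr e by auto
    ultimately show ?thesis by auto
  qed
qed

lemma align_B:
  assumes k: "k \<le> nB" and i: "i \<le> n" and eq: "B k = W i"
  shows "k = n - i \<and> (\<forall>m\<le>k. B m = W (n - m))"
proof -
  have p1: "fpath ET B k" using fpath_restrict[OF Bp k] .
  have p2: "fpath ET (\<lambda>t. W (n - t)) (n - i)"
  proof -
    have "fpath ET (\<lambda>t. W (n - t)) n" using fpath_rev[OF Wp] ET_sym by blast
    then show ?thesis using fpath_restrict by fastforce
  qed
  have "k = n - i \<and> (\<forall>m\<le>k. B m = W (n - m))"
    using path_unique[OF p1 p2] B0 Wn eq i by simp
  then show ?thesis .
qed

lemma align_C:
  assumes k: "k \<le> nC" and i: "i \<le> n" and eq: "C k = W i"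
  shows "nC - k = i \<and> (\<forall>m\<le>i. C (nC - m) = W m)"
proof -
  have p1: "fpath ET (\<lambda>t. C (nC - t)) (nC - k)"
  proof -
    have "fpath ET (\<lambda>t. C (nC - t)) nC" using fpath_rev[OF Cp] ET_sym by blast
    then show ?thesis using fpath_restrict by fastforce
  qed
  have p2: "fpath ET W i" using fpath_restrict[OF Wp i] .
  have "nC - k = i \<and> (\<forall>m\<le>nC - k. C (nC - m) = W m)"
    using path_unique[OF p1 p2] CnC W0 eq k by simp
  then show ?thesis by simp
qed

lemma deg_B:
  assumes k: "k \<le> nB" and i: "i \<le> n" and eq: "B k = W i" and m: "i < m" "m < n"
  shows "nbrs ET (W m) = {W (m - 1), W (m + 1)}"
proof -
  from align_B[OF k i eq] have kk: "k = n - i" and al: "\<And>t. t \<le> k \<Longrightarrow> B t = W (n - t)" by auto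
  define t where "t = n - m"
  have t1: "B t = W m" using al[of t] kk m by (simp add: t_def)
  have t2: "B (Suc t) = W (m - 1)" using al[of "Suc t"] kk m by (simp add: t_def Suc_diff_Suc)
  have t0: "B (t - 1) = W (m + 1)" using al[of "t - 1"] kk m by (simp add: t_def)
  have "B (Suc (Suc (t - 1))) = rot (B (Suc (t - 1))) (B (t - 1))" by (rule fw_rec)
  moreover have "Suc (t - 1) = t" using m by (simp add: t_def)
  ultimately have r1: "rot (W m) (W (m + 1)) = W (m - 1)" using t1 t2 t0 by simp
  have "W (Suc (Suc (m - 1))) = rot (W (Suc (m - 1))) (W (m - 1))" by (rule fw_rec)
  moreover have "Suc (m - 1) = m" using m by simp
  ultimately have r2: "rot (W m) (W (m - 1)) = W (m + 1)" by simp
  have e1: "ET (W m) (W (m - 1))" using WE[of "m - 1"] ET_sym \<open>Suc (m - 1) = m\<close> by metis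
  have e2: "ET (W m) (W (m + 1))" using WE[of m] by simp
  show ?thesis by (rule orbit2[OF e1 e2 r2 r1])
qed

lemma deg_C:
  assumes k: "k \<le> nC" and i: "i \<le> n" and eq: "C k = W i" and m: "0 < m" "m < i"
  shows "nbrs ET (W m) = {W (m - 1), W (m + 1)}"
proof -
  from align_C[OF k i eq] have kk: "nC - k = i" and al: "\<And>t. t \<le> i \<Longrightarrow> C (nC - t) = W t" by auto
  define t where "t = nC - m"
  have ge: "m + 1 \<le> nC" using kk m by linarith
  have t1: "C t = W m" using al[of m] m by (simp add: t_def)
  have "Suc t = nC - (m - 1)" using m ge by (simp add: t_def)
  then have t2: "C (Suc t) = W (m - 1)" using al[of "m - 1"] m by simp
  have t0: "C (t - 1) = W (m + 1)" using al[of "m + 1"] m ge by (simp add: t_def)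
  have "C (Suc (Suc (t - 1))) = rot (C (Suc (t - 1))) (C (t - 1))" by (rule fw_rec)
  moreover have "Suc (t - 1) = t" using ge m by (simp add: t_def)
  ultimately have r1: "rot (W m) (W (m + 1)) = W (m - 1)" using t1 t2 t0 by simp
  have "W (Suc (Suc (m - 1))) = rot (W (Suc (m - 1))) (W (m - 1))" by (rule fw_rec)
  moreover have "Suc (m - 1) = m" using m by simp
  ultimately have r2: "rot (W m) (W (m - 1)) = W (m + 1)" by simp
  have e1: "ET (W m) (W (m - 1))" using WE[of "m - 1"] ET_sym \<open>Suc (m - 1) = m\<close> by metis
  have e2: "ET (W m) (W (m + 1))" using WE[of m] by simp
  show ?thesis by (rule orbit2[OF e1 e2 r2 r1])
qed

lemma notB: "i \<le> n \<Longrightarrow> i < j \<Longrightarrow> k \<le> nB \<Longrightarrow> B k \<noteq> W i"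
proof
  assume "i \<le> n" "i < j" "k \<le> nB" "B k = W i"
  then have "nbrs ET (W j) = {W (j - 1), W (j + 1)}" using deg_B jn by blast
  then show False using j x_not2 by simp
qed

lemma notC: "i \<le> n \<Longrightarrow> j < i \<Longrightarrow> k \<le> nC \<Longrightarrow> C k \<noteq> W i"
proof
  assume "i \<le> n" "j < i" "k \<le> nC" "C k = W i"
  then have "nbrs ET (W j) = {W (j - 1), W (j + 1)}" using deg_C j0 by blast
  then show False using j x_not2 by simp
qed

lemma r_ne_p: "r \<noteq> p"
  using notB[of 0 nB] j0 BnB W0 by simp

lemma s_ne_q: "s \<noteq> q"
  using notC[of n 0] jn C0 Wn by simp

end


context tree_ctx
begin

lemma fwalk_avoid2:
  assumes w: "fwalk ET f n" and av: "\<And>t. i \<le> t \<Longrightarrow> t \<le> k \<Longrightarrow> f t \<noteq> a" and ik: "i \<le> k" "k \<le> n"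
  shows "(f i, f k) \<in> (Ravoid a)\<^sup>*"
  using ik
proof (induction k rule: dec_induct)
  case base then show ?case by simp
next
  case (step k)
  have "ET (f k) (f (Suc k))" using w step by (auto simp: fwalk_def)
  moreover have "f k \<noteq> a" "f (Suc k) \<noteq> a" using av step by auto
  ultimately have "(f k, f (Suc k)) \<in> Ravoid a" by (simp add: Ravoid_def)
  then show ?case using step by (meson Suc_leD rtrancl.rtrancl_into_rtrancl)
qed

end

context main_ctx
begin

lemma kappa_contra:
  assumes e: "G u v" and k: "kappa_LLY V G u v \<le> 0"
  shows False
  using curv[OF e] k by simp

lemma Winj: "a \<le> n \<Longrightarrow> b \<le> n \<Longrightarrow> W a = W b \<Longrightarrow> a = b"
  using fpath_inj[OF Wp] by blast

lemma Wfw: "fwalk ET W n" using Wp by (simp add: fpath_def)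
lemma Bfw: "fwalk ET B nB" using Bp by (simp add: fpath_def)
lemma Cfw: "fwalk ET C nC" using Cp by (simp add: fpath_def)

lemma Wne: "a \<le> n \<Longrightarrow> b \<le> n \<Longrightarrow> a \<noteq> b \<Longrightarrow> W a \<noteq> W b"
  using Winj by blast

lemma W_nadj:
  assumes "a \<le> n" "b \<le> n" "b \<noteq> Suc a" "a \<noteq> Suc b" "\<not> (a = 0 \<and> b = n)" "\<not> (a = n \<and> b = 0)"
  shows "\<not> G (W a) (W b)"
  using W_G_adj[of a b] assms by blast

lemma legB:
  assumes xB: "k \<le> nB" "B k = x" and nj: "3 \<le> n - j" and n5: "5 \<le> n"
  shows False
proof -
  let ?v = "W (j + 1)" and ?v2 = "W (j + 2)" and ?w0 = "W (j - 1)" and ?z = "W (j + 3)"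
  have Bk: "B k = W j" using xB j by simp
  have ff: "j + 3 \<le> n" "0 < j" "5 \<le> n" using nj j0 n5 by linarith+
  have nv: "nbrs ET ?v = {x, ?v2}"
    using deg_B[OF xB(1) j(1) Bk, of "j + 1"] nj j by (simp add: numeral_2_eq_2)
  have nv2: "nbrs ET ?v2 = {?v, ?z}"
    using deg_B[OF xB(1) j(1) Bk, of "j + 2"] nj j by (simp add: numeral_3_eq_3 numeral_2_eq_2)
  have vnl: "\<not> is_leaf ET ?v" using Wi[of "j + 1"] nj by simp
  have v2nl: "\<not> is_leaf ET ?v2" using Wi[of "j + 2"] nj by simp
  have xv: "G x ?v" using WE[of j] j G_ET by simp
  interpret ce: curv_edge V G x ?v by (rule curv_inst[OF xv])
  have Gv2: "\<And>z. G z ?v2 \<Longrightarrow> z = ?v \<or> z = ?z"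
    using v2nl nv2 G_nl2 ET_sym by (auto simp: nbrs_def)
  have "kappa_LLY V G x ?v \<le> 0"
  proof (rule ce.xb_crit[of "W (j + 2)" "W (j - 1)"])
    show "\<And>a b. a \<in> V \<Longrightarrow> b \<in> V \<Longrightarrow> \<exists>n. (a, b) \<in> adj_rel G ^^ n" by (rule G_conn)
    show "\<And>a b. G a b \<Longrightarrow> G b a" by (rule G_sym)
    show "?v2 \<in> V" by (rule WV)
    show "nbrs G ?v = {x, ?v2}" using nv nbrs_G_nl[OF vnl] by simp
    show xv2: "x \<noteq> ?v2"
    proof
      assume "x = ?v2"
      then have "W j = W (j + 2)" using j by simp
      moreover have "j + 2 \<le> n" using nj by simp
      ultimately have "j = j + 2" using Winj j by blast
      then show False by simp
    qed
    show "2 \<le> gdist G x ?v2"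
    proof (rule gdist_ge2[OF G_conn[OF xV WV] xv2])
      have j3n: "j + 3 \<le> n" using nj by linarith
      have "\<not> G (W j) (W (j + 2))" by (rule W_nadj) (use j3n j0 in linarith)+
      then show "\<not> G x ?v2" using j by simp
    qed
    show "?w0 \<in> nbrs G x"
    proof -
      have "ET (W (j - 1)) (W j)" using WE[of "j - 1"] j0 by simp
      then show ?thesis using j G_ET ET_sym by (auto simp: nbrs_def)
    qed
    show "?w0 \<noteq> ?v" by (rule Wne) (use j nj j0 in linarith)+
    show "3 \<le> gdist G ?w0 ?v2"
    proof (rule gdist_ge3[OF G_conn[OF WV WV]])
      show "?w0 \<noteq> ?v2" by (rule Wne) (use j nj j0 in linarith)+
      show "\<not> G ?w0 ?v2" by (rule W_nadj) (use ff in linarith)+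
      fix z assume z1: "G ?w0 z" and z2: "G z ?v2"
      from Gv2[OF z2] show False
      proof
        assume "z = ?v"
        then have "G (W (j - 1)) (W (j + 1))" using z1 by simp
        moreover have "\<not> G (W (j - 1)) (W (j + 1))" by (rule W_nadj) (use ff in linarith)+
        ultimately show False by blast
      next
        assume "z = ?z"
        then have "G (W (j - 1)) (W (j + 3))" using z1 by simp
        moreover have "\<not> G (W (j - 1)) (W (j + 3))" by (rule W_nadj) (use ff in linarith)+
        ultimately show False by blast
      qed
    qed
    fix w assume w: "w \<in> nbrs G x" "w \<noteq> ?v"
    show "2 \<le> gdist G w ?v2"
    proof (rule gdist_ge2[OF G_conn])
      show "w \<in> V" using w G_V by (auto simp: nbrs_def)
      show "?v2 \<in> V" by (rule WV)
      show nG: "\<not> G w ?v2"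
      proof
        assume "G w ?v2"
        then have "w = ?z" using Gv2 w by auto
        then have "G (W j) (W (j + 3))" using w j by (simp add: nbrs_def)
        moreover have "\<not> G (W j) (W (j + 3))" by (rule W_nadj) (use ff in linarith)+
        ultimately show False by blast
      qed
      show "w \<noteq> ?v2"
      proof
        assume "w = ?v2"
        then have "G (W j) (W (j + 2))" using w j by (simp add: nbrs_def)
        moreover have "\<not> G (W j) (W (j + 2))" by (rule W_nadj) (use ff in linarith)+
        ultimately show False by blast
      qed
    qed
  qed
  then show False using kappa_contra[OF xv] by simp
qed

lemma legC:
  assumes xC: "k \<le> nC" "C k = x" and j3: "3 \<le> j" and n5: "5 \<le> n"
  shows False
proof -
  let ?v = "W (j - 1)" and ?v2 = "W (j - 2)" and ?w0 = "W (j + 1)" and ?z = "W (j - 3)"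
  have Ck: "C k = W j" using xC j by simp
  have ff: "3 \<le> j" "j < n" "5 \<le> n" using j3 jn n5 by linarith+
  have nv: "nbrs ET ?v = {x, ?v2}"
    using deg_C[OF xC(1) j(1) Ck, of "j - 1"] j3 j by (auto simp: numeral_2_eq_2)
  have e1: "j - 1 - 1 = j - 2" "j - 2 - 1 = j - 3" "j - 2 + 1 = j - 1" using j3 by auto
  have "nbrs ET ?v2 = {W (j - 2 - 1), W (j - 2 + 1)}"
    by (rule deg_C[OF xC(1) j(1) Ck]) (use j3 in auto)
  then have nv2: "nbrs ET ?v2 = {?z, ?v}" by (simp only: e1)
  have vnl: "\<not> is_leaf ET ?v" using Wi[of "j - 1"] j3 jn by simp
  have v2nl: "\<not> is_leaf ET ?v2" using Wi[of "j - 2"] j3 jn by simp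
  have xv: "G x ?v"
  proof -
    have "ET (W (j - 1)) (W j)" using WE[of "j - 1"] j0 by simp
    then show ?thesis using j G_ET ET_sym by auto
  qed
  interpret ce: curv_edge V G x ?v by (rule curv_inst[OF xv])
  have Gv2: "\<And>z. G z ?v2 \<Longrightarrow> z = ?v \<or> z = ?z"
    using v2nl nv2 G_nl2 ET_sym by (auto simp: nbrs_def)
  have "kappa_LLY V G x ?v \<le> 0"
  proof (rule ce.xb_crit[of "W (j - 2)" "W (j + 1)"])
    show "\<And>a b. a \<in> V \<Longrightarrow> b \<in> V \<Longrightarrow> \<exists>n. (a, b) \<in> adj_rel G ^^ n" by (rule G_conn)
    show "\<And>a b. G a b \<Longrightarrow> G b a" by (rule G_sym)
    show "?v2 \<in> V" by (rule WV)
    show "nbrs G ?v = {x, ?v2}" using nv nbrs_G_nl[OF vnl] by simp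
    show xv2: "x \<noteq> ?v2"
    proof
      assume "x = ?v2"
      then have "W j = W (j - 2)" using j by simp
      moreover have "j - 2 \<le> n" using j by simp
      ultimately have "j = j - 2" using Winj j by blast
      then show False using j3 by simp
    qed
    show "2 \<le> gdist G x ?v2"
    proof (rule gdist_ge2[OF G_conn[OF xV WV] xv2])
      have "\<not> G (W j) (W (j - 2))" by (rule W_nadj) (use j3 jn in linarith)+
      then show "\<not> G x ?v2" using j by simp
    qed
    show "?w0 \<in> nbrs G x"
    proof -
      have "ET (W j) (W (j + 1))" using WE[of j] by simp
      then show ?thesis using j G_ET by (auto simp: nbrs_def)
    qed
    show "?w0 \<noteq> ?v" by (rule Wne) (use j jn j0 in linarith)+
    show "3 \<le> gdist G ?w0 ?v2"
    proof (rule gdist_ge3[OF G_conn[OF WV WV]])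
      show "?w0 \<noteq> ?v2" by (rule Wne) (use j jn j3 in linarith)+
      show "\<not> G ?w0 ?v2" by (rule W_nadj) (use ff in linarith)+
      fix z assume z1: "G ?w0 z" and z2: "G z ?v2"
      from Gv2[OF z2] show False
      proof
        assume "z = ?v"
        then have "G (W (j + 1)) (W (j - 1))" using z1 by simp
        moreover have "\<not> G (W (j + 1)) (W (j - 1))" by (rule W_nadj) (use ff in linarith)+
        ultimately show False by blast
      next
        assume "z = ?z"
        then have "G (W (j + 1)) (W (j - 3))" using z1 by simp
        moreover have "\<not> G (W (j + 1)) (W (j - 3))" by (rule W_nadj) (use ff in linarith)+
        ultimately show False by blast
      qed
    qed
    fix w assume w: "w \<in> nbrs G x" "w \<noteq> ?v"
    show "2 \<le> gdist G w ?v2"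
    proof (rule gdist_ge2[OF G_conn])
      show "w \<in> V" using w G_V by (auto simp: nbrs_def)
      show "?v2 \<in> V" by (rule WV)
      show nG: "\<not> G w ?v2"
      proof
        assume "G w ?v2"
        then have "w = ?z" using Gv2 w by auto
        then have "G (W j) (W (j - 3))" using w j by (simp add: nbrs_def)
        moreover have "\<not> G (W j) (W (j - 3))" by (rule W_nadj) (use ff in linarith)+
        ultimately show False by blast
      qed
      show "w \<noteq> ?v2"
      proof
        assume "w = ?v2"
        then have "G (W j) (W (j - 2))" using w j by (simp add: nbrs_def)
        moreover have "\<not> G (W j) (W (j - 2))" by (rule W_nadj) (use ff in linarith)+
        ultimately show False by blast
      qed
    qed
  qed
  then show False using kappa_contra[OF xv] by simp
qed

end


context main_ctx
begin

lemma Binj: "a \<le> nB \<Longrightarrow> b \<le> nB \<Longrightarrow> B a = B b \<Longrightarrow> a = b"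
  using fpath_inj[OF Bp] by blast
lemma Cinj: "a \<le> nC \<Longrightarrow> b \<le> nC \<Longrightarrow> C a = C b \<Longrightarrow> a = b"
  using fpath_inj[OF Cp] by blast

lemma caseA:
  assumes sr: "s = r"
  shows "(\<exists>k\<le>nB. B k = x) \<and> (\<exists>k\<le>nC. C k = x)"
proof -
  have Bav: "(q, r) \<in> (Ravoid x)\<^sup>*" if nb: "\<not> (\<exists>k\<le>nB. B k = x)"
  proof -
    have "(B 0, B nB) \<in> (Ravoid x)\<^sup>*"
      by (rule fwalk_avoid2[OF Bfw]) (use nb in auto)
    then show ?thesis using B0 BnB by simp
  qed
  have Cav: "(s, p) \<in> (Ravoid x)\<^sup>*" if nc: "\<not> (\<exists>k\<le>nC. C k = x)"
  proof -
    have "(C 0, C nC) \<in> (Ravoid x)\<^sup>*"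
      by (rule fwalk_avoid2[OF Cfw]) (use nc in auto)
    then show ?thesis using C0 CnC by simp
  qed
  have Wav: "(W a, W b) \<in> (Ravoid x)\<^sup>*" if "a \<le> b" "b \<le> n" "j < a \<or> b < j" for a b
  proof (rule fwalk_avoid2[OF Wfw _ that(1,2)])
    fix t assume t: "a \<le> t" "t \<le> b"
    show "W t \<noteq> x"
    proof
      assume "W t = x" then have "W t = W j" using j by simp
      then have "t = j" using Winj t that j by simp
      then show False using t that by linarith
    qed
  qed
  have xsep: "\<not> ((p, q) \<in> (Ravoid x)\<^sup>*)" using sep .
  have one: "(\<exists>k\<le>nB. B k = x) \<or> (\<exists>k\<le>nC. C k = x)"
  proof (rule ccontr)
    assume "\<not> ?thesis"
    then have "(q, r) \<in> (Ravoid x)\<^sup>*" "(s, p) \<in> (Ravoid x)\<^sup>*" using Bav Cav by auto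
    then have "(q, p) \<in> (Ravoid x)\<^sup>*" using sr by (metis rtrancl_trans)
    then show False using Ravoid_sym xsep by blast
  qed
  have B_imp_C: "\<exists>k\<le>nC. C k = x" if xb: "\<exists>k\<le>nB. B k = x"
  proof (rule ccontr)
    assume nc: "\<not> ?thesis"
    obtain k where k: "k \<le> nB" "B k = x" using xb by blast
    have kn: "k < nB"
    proof (rule ccontr)
      assume "\<not> k < nB" then have "k = nB" using k by simp
      then have "x = r" using k BnB by simp
      then show False using rleaf xnl by simp
    qed
    let ?c = "B (Suc k)"
    have xc: "ET x ?c" using BE[of k] k by simp
    have cne: "?c \<noteq> W (j - 1)" using notB[of "j - 1" "Suc k"] j j0 kn by simp
    have r1: "(?c, r) \<in> (Ravoid x)\<^sup>*"
    proof -
      have "(B (Suc k), B nB) \<in> (Ravoid x)\<^sup>*"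
      proof (rule fwalk_avoid2[OF Bfw])
        fix t assume t: "Suc k \<le> t" "t \<le> nB"
        show "B t \<noteq> x"
        proof
          assume "B t = x" then have "B t = B k" using k by simp
          then have "t = k" using Binj t k by simp
          then show False using t by simp
        qed
      qed (use kn in auto)
      then show ?thesis using BnB by simp
    qed
    have r2: "(r, p) \<in> (Ravoid x)\<^sup>*" using Cav nc sr by simp
    have r3: "(p, W (j - 1)) \<in> (Ravoid x)\<^sup>*" using Wav[of 0 "j - 1"] W0 j j0 by simp
    have "(?c, W (j - 1)) \<in> (Ravoid x)\<^sup>*" using r1 r2 r3 by (metis rtrancl_trans)
    moreover have "ET x (W (j - 1))"
    proof -
      have "ET (W (j - 1)) (W j)" using WE[of "j - 1"] j0 by simp
      then show ?thesis using j ET_sym by simp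
    qed
    ultimately show False using sep_nbrs xc cne by blast
  qed
  have C_imp_B: "\<exists>k\<le>nB. B k = x" if xcc: "\<exists>k\<le>nC. C k = x"
  proof (rule ccontr)
    assume nb: "\<not> ?thesis"
    obtain k where k: "k \<le> nC" "C k = x" using xcc by blast
    have k0: "0 < k"
    proof (rule ccontr)
      assume "\<not> 0 < k" then have "x = s" using k C0 by simp
      then show False using sleaf xnl by simp
    qed
    let ?c = "C (k - 1)"
    have xc: "ET x ?c"
    proof -
      have "ET (C (k - 1)) (C k)" using CE[of "k - 1"] k0 by simp
      then show ?thesis using k ET_sym by simp
    qed
    have "C (k - 1) \<noteq> W (j + 1)" by (rule notC) (use jn k in auto)
    then have cne: "W (j + 1) \<noteq> ?c" by metis
    have r1: "(W (j + 1), q) \<in> (Ravoid x)\<^sup>*" using Wav[of "j + 1" n] Wn jn by simp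
    have r2: "(q, r) \<in> (Ravoid x)\<^sup>*" using Bav nb by simp
    have r3: "(r, ?c) \<in> (Ravoid x)\<^sup>*"
    proof -
      have "(C 0, C (k - 1)) \<in> (Ravoid x)\<^sup>*"
      proof (rule fwalk_avoid2[OF Cfw])
        fix t assume t: "0 \<le> t" "t \<le> k - 1"
        show "C t \<noteq> x"
        proof
          assume "C t = x" then have "C t = C k" using k by simp
          then have "t = k" using Cinj t k by simp
          then show False using t k0 by simp
        qed
      qed (use k in auto)
      then show ?thesis using C0 sr by simp
    qed
    have "(W (j + 1), ?c) \<in> (Ravoid x)\<^sup>*" using r1 r2 r3 by (metis rtrancl_trans)
    moreover have "ET x (W (j + 1))" using WE[of j] j by simp
    ultimately show False using sep_nbrs xc cne by blast
  qed
  show ?thesis using one B_imp_C C_imp_B by blast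
qed

lemma caseB:
  assumes e: "ET (W 1) r"
  shows "j = 1 \<and> (\<exists>k\<le>nB. B k = x)"
proof -
  have "ET (B (nB - 1)) (B nB)" using BE[of "nB - 1"] nB1 by simp
  then have "B (nB - 1) = par r" using leaf_only[OF rleaf] BnB ET_sym by simp
  moreover have "W 1 = par r" using leaf_only[OF rleaf] e ET_sym by simp
  ultimately have eq: "B (nB - 1) = W 1" by simp
  have j1: "j = 1"
  proof (rule ccontr)
    assume "j \<noteq> 1" then have "1 < j" using j0 by simp
    then show False using notB[of 1 "nB - 1"] eq n1 by simp
  qed
  then have bx: "B (nB - 1) = x" using eq j by simp
  have "nB - 1 \<le> nB" by simp
  then show ?thesis using j1 bx by blast
qed

lemma caseC:
  assumes e: "ET (W (n - 1)) s"
  shows "j = n - 1 \<and> (\<exists>k\<le>nC. C k = x)"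
proof -
  have "C 1 = par s" by (simp add: fw1)
  moreover have "W (n - 1) = par s" using leaf_only[OF sleaf] e ET_sym by simp
  ultimately have eq: "C 1 = W (n - 1)" by simp
  have j1: "j = n - 1"
  proof (rule ccontr)
    assume "j \<noteq> n - 1" then have "j < n - 1" using jn by simp
    then show False using notC[of "n - 1" 1] eq nC1 by simp
  qed
  then have cx: "C 1 = x" using eq j by simp
  show ?thesis using j1 nC1 cx by blast
qed

lemma caseD:
  assumes n5: "5 \<le> n" and sr: "s \<noteq> r" and e1: "\<not> ET (W 1) r" and e2: "\<not> ET (W (n - 1)) s"
  shows False
proof -
  let ?a1 = "W 1" and ?b1 = "W (n - 1)"
  have ff: "5 \<le> n" using n5 .
  have a1nl: "\<not> is_leaf ET ?a1" using Wi[of 1] n5 by simp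
  have b1nl: "\<not> is_leaf ET ?b1" using Wi[of "n - 1"] n5 by simp
  have pa: "par p = ?a1" using fw1[of p] by simp
  have pq': "par q = ?b1"
  proof -
    have "ET (W (n - 1)) (W n)" using WE[of "n - 1"] n5 by simp
    then have "ET q (W (n - 1))" using Wn ET_sym by metis
    from leaf_only[OF qleaf this] show ?thesis by simp
  qed
  have Np: "nbrs G p = {?a1, q, s}" using nbrs_G_leaf[OF pleaf sleaf snl] pa by simp
  have Nq: "nbrs G q = {?b1, r, p}" using nbrs_G_leaf[OF qleaf pleaf refl] pq' by simp
  have pqG: "G p q" using pleaf qleaf by (simp add: halin_edges_def cycle_edge_def)
  interpret ce: curv_edge V G p q by (rule curv_inst[OF pqG])
  have ln: "\<And>a b. is_leaf ET a \<Longrightarrow> \<not> is_leaf ET b \<Longrightarrow> a \<noteq> b" by auto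
  have pq: "p \<noteq> q" using nl_ne[OF pleaf] by metis
  have ps: "p \<noteq> s" using nl_ne[OF sleaf] snl by metis
  have pr: "p \<noteq> r" using r_ne_p by metis
  have qs: "q \<noteq> s" using s_ne_q by metis
  have qr: "q \<noteq> r" using nl_ne[OF qleaf] by metis
  have ab: "?a1 \<noteq> ?b1" by (rule Wne) (use ff in linarith)+
  have sV: "s \<in> V" using leaf_V[OF sleaf] .
  have rV: "r \<in> V" using leaf_V[OF rleaf] .
  have dist: "distinct [p, q, ?a1, ?b1, s, r]"
    using ln[OF pleaf a1nl] ln[OF pleaf b1nl] ln[OF qleaf a1nl] ln[OF qleaf b1nl]
      ln[OF sleaf a1nl] ln[OF rleaf a1nl] ln[OF sleaf b1nl] ln[OF rleaf b1nl]
      pq ps pr qs qr ab sr by auto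
  have d1: "2 \<le> gdist G ?a1 q"
  proof (rule gdist_ge2[OF G_conn[OF WV leaf_V[OF qleaf]]])
    show "?a1 \<noteq> q" using ln[OF qleaf a1nl] by metis
    have "\<not> G (W 1) (W n)" by (rule W_nadj) (use ff in linarith)+
    then show "\<not> G ?a1 q" using Wn by simp
  qed
  have d2: "2 \<le> gdist G ?a1 r"
  proof (rule gdist_ge2[OF G_conn[OF WV rV]])
    show "?a1 \<noteq> r" using ln[OF rleaf a1nl] by metis
    show "\<not> G ?a1 r" using G_nl1[OF a1nl] e1 by simp
  qed
  have d3: "3 \<le> gdist G ?a1 ?b1"
  proof (rule gdist_ge3[OF G_conn[OF WV WV] ab])
    show "\<not> G ?a1 ?b1" by (rule W_nadj) (use ff in linarith)+
    fix z assume z1: "G ?a1 z" and z2: "G z ?b1"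
    have ez1: "ET ?a1 z" using z1 G_nl1[OF a1nl] by simp
    have ez2: "ET z ?b1" using z2 G_nl2[OF b1nl] by simp
    show False
    proof (cases "z \<in> W ` {..n}")
      case True
      then obtain t where t: "t \<le> n" "z = W t" by blast
      have c1: "t = Suc 1 \<or> 1 = Suc t" using no_chord[OF Wp _ t(1), of 1] ez1 t n5 by simp
      have c2: "n - 1 = Suc t \<or> t = Suc (n - 1)" using no_chord[OF Wp t(1), of "n - 1"] ez2 t n5 by simp
      show False using c1 c2 t n5 by linarith
    next
      case False
      have "ET z (W 1)" using ez1 ET_sym by blast
      moreover have "1 < n - 1" "n - 1 \<le> n" using n5 by linarith+
      ultimately show False using no_ext[OF Wp _ _ False, of 1 "n - 1"] ez2 by blast
    qed
  qed
  have d4: "2 \<le> gdist G p ?b1"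
  proof (rule gdist_ge2[OF G_conn[OF leaf_V[OF pleaf] WV]])
    show "p \<noteq> ?b1" using ln[OF pleaf b1nl] .
    have "\<not> G (W 0) (W (n - 1))" by (rule W_nadj) (use ff in linarith)+
    then show "\<not> G p ?b1" using W0 by simp
  qed
  have d5: "2 \<le> gdist G s ?b1"
  proof (rule gdist_ge2[OF G_conn[OF sV WV]])
    show "s \<noteq> ?b1" using ln[OF sleaf b1nl] .
    show "\<not> G s ?b1" using G_nl2[OF b1nl] e2 ET_sym by blast
  qed
  have "kappa_LLY V G p q \<le> 0"
    by (rule ce.pq_crit[OF G_conn WV WV sV rV dist Np Nq d1 d2 d3 d4 d5])
  then show False using kappa_contra[OF pqG] by simp
qed

lemma n_le4: "n \<le> 4"
proof (rule ccontr)
  assume "\<not> n \<le> 4" then have n5: "5 \<le> n" by simp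
  show False
  proof (cases "s = r")
    case True
    then have xb: "\<exists>k\<le>nB. B k = x" and xc: "\<exists>k\<le>nC. C k = x" using caseA by auto
    show False
    proof (cases "3 \<le> n - j")
      case True then show False using xb legB n5 by blast
    next
      case False then have "3 \<le> j" using n5 by linarith
      then show False using xc legC n5 by blast
    qed
  next
    case sr: False
    show False
    proof (cases "ET (W 1) r")
      case True
      then have "j = 1" "\<exists>k\<le>nB. B k = x" using caseB by auto
      moreover have "3 \<le> n - j" using n5 \<open>j = 1\<close> by simp
      ultimately show False using legB n5 by blast
    next
      case e1: False
      show False
      proof (cases "ET (W (n - 1)) s")
        case True
        then have "j = n - 1" "\<exists>k\<le>nC. C k = x" using caseC by auto
        moreover have "3 \<le> j" using n5 \<open>j = n - 1\<close> by simp
        ultimately show False using legC n5 by blast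
      next
        case False
        then show False using caseD n5 sr e1 by blast
      qed
    qed
  qed
qed

lemma gdist_bound: "gdist ET x p + gdist ET x q \<le> 4"
proof -
  have f1: "fpath ET (\<lambda>t. W (j - t)) j" using fpath_rev[OF fpath_restrict[OF Wp j(1)]] ET_sym by blast
  have "((\<lambda>t. W (j - t)) 0, (\<lambda>t. W (j - t)) j) \<in> adj_rel ET ^^ (j - 0)"
    by (rule fwalk_relpow) (use f1 in \<open>auto simp: fpath_def\<close>)
  then have "(x, p) \<in> adj_rel ET ^^ j" using j W0 by simp
  then have g1: "gdist ET x p \<le> j" unfolding gdist_def by (rule Least_le)
  have "(W j, W n) \<in> adj_rel ET ^^ (n - j)" by (rule fwalk_relpow[OF Wfw j(1)]) simp
  then have "(x, q) \<in> adj_rel ET ^^ (n - j)" using j Wn by simp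
  then have g2: "gdist ET x q \<le> n - j" unfolding gdist_def by (rule Least_le)
  show ?thesis using g1 g2 n_le4 j by linarith
qed

end


theorem lemma3p2:
  fixes V :: "'a set" and ET :: "'a \<Rightarrow> 'a \<Rightarrow> bool" and rot :: "'a \<Rightarrow> 'a \<Rightarrow> 'a"
    and x p q :: 'a
  assumes "gen_halin V ET rot"
    and "\<forall>u v. halin_edges ET rot u v \<longrightarrow> kappa_LLY V (halin_edges ET rot) u v > 0"
    and "x \<in> V" and "deg ET x = max_deg V ET"
    and "cycle_edge ET rot p q"
    and "(p, q) \<notin> {(a, b). ET a b \<and> a \<noteq> x \<and> b \<noteq> x}\<^sup>*"
  shows "gdist ET x p + gdist ET x q \<le> 4"
proof -
  have tr: "is_tree V ET" and md: "3 \<le> max_deg V ET" and rs: "rotation_system V ET rot"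
    using assms(1) by (auto simp: gen_halin_def)
  interpret hc: halin_ctx V ET rot
    by (simp add: halin_ctx_def halin_ctx_axioms_def tree_ctx_def tr rs)
  have d3: "3 \<le> deg ET x" using assms(4) md by simp
  have Req: "{(a, b). ET a b \<and> a \<noteq> x \<and> b \<noteq> x} = hc.Ravoid x" by (simp add: hc.Ravoid_def)
  have sep: "(p, q) \<notin> (hc.Ravoid x)\<^sup>*" using assms(6) Req by simp
  have sep': "(q, p) \<notin> (hc.Ravoid x)\<^sup>*" using sep hc.Ravoid_sym by blast
  have curv: "\<And>u v. halin_edges ET rot u v \<Longrightarrow> 0 < kappa_LLY V (halin_edges ET rot) u v"
    using assms(2) by blast
  have pl: "is_leaf ET p" and ql: "is_leaf ET q"
    and nl: "next_leaf ET rot p = q \<or> next_leaf ET rot q = p"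
    using assms(5) by (auto simp: cycle_edge_def)
  from nl show ?thesis
  proof
    assume pq: "next_leaf ET rot p = q"
    obtain s where s: "is_leaf ET s" "next_leaf ET rot s = p" using hc.nl_surj[OF pl] by blast
    interpret mc: main_ctx V ET rot x p s
      by (unfold_locales) (use assms(3) d3 pl s sep pq curv in auto)
    show ?thesis using mc.gdist_bound pq by simp
  next
    assume qp: "next_leaf ET rot q = p"
    obtain s where s: "is_leaf ET s" "next_leaf ET rot s = q" using hc.nl_surj[OF ql] by blast
    interpret mc: main_ctx V ET rot x q s
      by (unfold_locales) (use assms(3) d3 ql s sep' qp curv in auto)
    show ?thesis using mc.gdist_bound qp by simp
  qed
qed


end
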